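(* Let $H$ be a Hopf algebra over $\mathbb{C}$ with antipode $S$ and let $A$ be a left $H$-module algebra. On $\mathcal H_{CM}=A\rtimes H\ltimes A^{op}$ (underlying space $A\otimes H\otimes A$) define the product $(a\rtimes h\ltimes b)(a'\rtimes h'\ltimes b')=a(h_{(1)}\triangleright a')\rtimes h_{(2)}h'\ltimes(h_{(3)}\triangleright b')b$, source $\alpha(a)=a\rtimes1\ltimes1$, target $\beta(a)=1\rtimes1\ltimes a$, coproduct $\Delta(a\rtimes h\ltimes b)=(a\rtimes h_{(1)}\ltimes1)\otimes_A(1\rtimes h_{(2)}\ltimes b)$ and counit $\varepsilon(a\rtimes h\ltimes b)=a\varepsilon(h)b$. Then $\mathcal H_{CM}$ is a left $\times_A$-Hopf algebra: the map $\nu:\mathcal H_{CM}\otimes_{A^{op}}\mathcal H_{CM}\to\mathcal H_{CM}\otimes_A\mathcal H_{CM}$, $\nu((a\rtimes h\ltimes b)\otimes(a'\rtimes h'\ltimes b'))=(a\rtimes h_{(1)}\ltimes1)\otimes_A(h_{(2)}\triangleright a'\rtimes h_{(3)}h'\ltimes(h_{(4)}\triangleright b')b)$, is bijective.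
   Context: A left $R$-bialgebroid is a $\mathbb{C}$-algebra $\mathcal K$ with algebra maps $\mathfrak s:R\to\mathcal K$ (source), $\mathfrak t:R^{op}\to\mathcal K$ (target) with commuting ranges, $R$-bimodule structure $r_1\cdot k\cdot r_2=\mathfrak s(r_1)\mathfrak t(r_2)k$, and $R$-bimodule maps $\Delta(k)=k_{(1)}\otimes_R k_{(2)}$, $\varepsilon:\mathcal K\to R$ forming a coassociative counital $R$-coring, with $k_{(1)}\mathfrak t(r)\otimes_R k_{(2)}=k_{(1)}\otimes_R k_{(2)}\mathfrak s(r)$, $\Delta(1)=1\otimes_R1$, $\Delta(kk')=k_{(1)}k'_{(1)}\otimes_R k_{(2)}k'_{(2)}$, $\varepsilon(1)=1_R$, $\varepsilon(kk')=\varepsilon(k\mathfrak s(\varepsilon(k')))$. It is a left $\times_R$-Hopf algebra if $\nu:\mathcal K\otimes_{R^{op}}\mathcal K\to\mathcal K\otimes_R\mathcal K$, $k\otimes k'\mapsto k_{(1)}\otimes_R k_{(2)}k'$, is bijective, where the domain is balanced by $k\mathfrak t(r)\otimes k'=k\otimes\mathfrak t(r)k'$. Sweedler notation $h_{(1)}\otimes h_{(2)}\otimes\cdots$ is used for iterated coproducts in $H$. *)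

theory Defs
  imports Complex_Main "HOL-Library.Poly_Mapping"
begin

type_synonym 'a fs = "'a \<Rightarrow>\<^sub>0 complex"

definition gen :: "'a \<Rightarrow> 'a fs" where
  "gen x = Poly_Mapping.single x 1"

definition fsc :: "complex \<Rightarrow> 'a fs \<Rightarrow> 'a fs" where
  "fsc c f = Poly_Mapping.map (\<lambda>v. c * v) f"

definition lext :: "('a \<Rightarrow> 'b fs) \<Rightarrow> 'a fs \<Rightarrow> 'b fs" where
  "lext g f = (\<Sum>x\<in>Poly_Mapping.keys f. fsc (Poly_Mapping.lookup f x) (g x))"

definition bext :: "('a \<Rightarrow> 'b \<Rightarrow> 'c fs) \<Rightarrow> 'a fs \<Rightarrow> 'b fs \<Rightarrow> 'c fs" where
  "bext g f1 f2 = (\<Sum>x\<in>Poly_Mapping.keys f1. \<Sum>y\<in>Poly_Mapping.keys f2. fsc (Poly_Mapping.lookup f1 x * Poly_Mapping.lookup f2 y) (g x y))"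

definition tprod :: "'a fs \<Rightarrow> 'b fs \<Rightarrow> ('a \<times> 'b) fs" where
  "tprod f g = bext (\<lambda>x y. gen (x, y)) f g"

definition fmap :: "('a \<Rightarrow> 'b) \<Rightarrow> 'a fs \<Rightarrow> 'b fs" where
  "fmap g f = lext (\<lambda>x. gen (g x)) f"

definition feval :: "(complex \<Rightarrow> 'v \<Rightarrow> 'v) \<Rightarrow> 'v::comm_monoid_add fs \<Rightarrow> 'v" where
  "feval sc f = (\<Sum>x\<in>Poly_Mapping.keys f. sc (Poly_Mapping.lookup f x) x)"

definition fspan :: "'a fs set \<Rightarrow> 'a fs set" where
  "fspan R = {(\<Sum>r\<in>F. fsc (c r) r) | F c. finite F \<and> F \<subseteq> R}"

definition fequiv :: "'a fs set \<Rightarrow> 'a fs \<Rightarrow> 'a fs \<Rightarrow> bool" where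
  "fequiv R x y \<longleftrightarrow> x - y \<in> fspan R"

text \<open>free(V)/span(lin_rel sc) is V itself.\<close>
definition lin_rel :: "(complex \<Rightarrow> 'v::ab_group_add \<Rightarrow> 'v) \<Rightarrow> 'v fs set" where
  "lin_rel sc = {gen (x + y) - gen x - gen y | x y. True}
              \<union> {gen (sc c x) - fsc c (gen x) | c x. True}"

text \<open>If free(V)/R1 = V and free(W)/R2 = W then free(V x W)/trel R1 R2 = V \<otimes>_C W.\<close>
definition trel :: "'a fs set \<Rightarrow> 'b fs set \<Rightarrow> ('a \<times> 'b) fs set" where
  "trel R1 R2 = {tprod r (gen w) | r w. r \<in> R1} \<union> {tprod (gen v) r | v r. r \<in> R2}"

definition alg_over_C :: "(complex \<Rightarrow> 'h::ring_1 \<Rightarrow> 'h) \<Rightarrow> bool" where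
  "alg_over_C sc \<longleftrightarrow> vector_space sc \<and>
     (\<forall>c x y. sc c (x * y) = sc c x * y \<and> sc c (x * y) = x * sc c y)"

definition hopf_algebra ::
  "(complex \<Rightarrow> 'h::ring_1 \<Rightarrow> 'h) \<Rightarrow> ('h \<Rightarrow> ('h \<times> 'h) fs) \<Rightarrow> ('h \<Rightarrow> complex) \<Rightarrow> ('h \<Rightarrow> 'h) \<Rightarrow> bool"
  where
  "hopf_algebra sc \<Delta> \<epsilon> S \<longleftrightarrow>
     (let LH = lin_rel sc; T2 = trel LH LH; T3 = trel LH T2 in
     alg_over_C sc \<and>
     \<comment> \<open>coproduct: linear, coassociative, algebra map\<close>
     (\<forall>x y. fequiv T2 (\<Delta> (x + y)) (\<Delta> x + \<Delta> y)) \<and>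
     (\<forall>c x. fequiv T2 (\<Delta> (sc c x)) (fsc c (\<Delta> x))) \<and>
     (\<forall>h. fequiv T3
        (fmap (\<lambda>((x, y), z). (x, y, z)) (lext (\<lambda>(x, y). tprod (\<Delta> x) (gen y)) (\<Delta> h)))
        (lext (\<lambda>(x, y). tprod (gen x) (\<Delta> y)) (\<Delta> h))) \<and>
     (\<forall>x y. fequiv T2 (\<Delta> (x * y))
        (bext (\<lambda>(a, b) (a', b'). gen (a * a', b * b')) (\<Delta> x) (\<Delta> y))) \<and>
     fequiv T2 (\<Delta> 1) (gen (1, 1)) \<and>
     \<comment> \<open>counit: linear, counital, algebra map\<close>
     (\<forall>x y. \<epsilon> (x + y) = \<epsilon> x + \<epsilon> y) \<and>
     (\<forall>c x. \<epsilon> (sc c x) = c * \<epsilon> x) \<and>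
     (\<forall>h. feval sc (fmap (\<lambda>(x, y). sc (\<epsilon> x) y) (\<Delta> h)) = h) \<and>
     (\<forall>h. feval sc (fmap (\<lambda>(x, y). sc (\<epsilon> y) x) (\<Delta> h)) = h) \<and>
     (\<forall>x y. \<epsilon> (x * y) = \<epsilon> x * \<epsilon> y) \<and>
     \<epsilon> 1 = 1 \<and>
     \<comment> \<open>antipode\<close>
     (\<forall>x y. S (x + y) = S x + S y) \<and>
     (\<forall>c x. S (sc c x) = sc c (S x)) \<and>
     (\<forall>h. feval sc (fmap (\<lambda>(x, y). S x * y) (\<Delta> h)) = sc (\<epsilon> h) 1) \<and>
     (\<forall>h. feval sc (fmap (\<lambda>(x, y). x * S y) (\<Delta> h)) = sc (\<epsilon> h) 1))"

definition module_algebra ::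
  "(complex \<Rightarrow> 'h::ring_1 \<Rightarrow> 'h) \<Rightarrow> ('h \<Rightarrow> ('h \<times> 'h) fs) \<Rightarrow> ('h \<Rightarrow> complex)
   \<Rightarrow> (complex \<Rightarrow> 'a::ring_1 \<Rightarrow> 'a) \<Rightarrow> ('h \<Rightarrow> 'a \<Rightarrow> 'a) \<Rightarrow> bool" where
  "module_algebra scH \<Delta> \<epsilon> scA act \<longleftrightarrow>
     alg_over_C scA \<and>
     (\<forall>x y a. act (x + y) a = act x a + act y a) \<and>
     (\<forall>c x a. act (scH c x) a = scA c (act x a)) \<and>
     (\<forall>h a b. act h (a + b) = act h a + act h b) \<and>
     (\<forall>h c a. act h (scA c a) = scA c (act h a)) \<and>
     (\<forall>x y a. act (x * y) a = act x (act y a)) \<and>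
     (\<forall>a. act 1 a = a) \<and>
     (\<forall>h a b. act h (a * b) = feval scA (fmap (\<lambda>(x, y). act x a * act y b) (\<Delta> h))) \<and>
     (\<forall>h. act h 1 = scA (\<epsilon> h) 1)"

text \<open>Iterated coproducts h(1) x h(2) x h(3) and h(1) x ... x h(4).\<close>
definition cop2 :: "('h \<Rightarrow> ('h \<times> 'h) fs) \<Rightarrow> 'h \<Rightarrow> ('h \<times> 'h \<times> 'h) fs" where
  "cop2 \<Delta> h = fmap (\<lambda>((x, y), z). (x, y, z)) (lext (\<lambda>(x, y). tprod (\<Delta> x) (gen y)) (\<Delta> h))"

definition cop3 :: "('h \<Rightarrow> ('h \<times> 'h) fs) \<Rightarrow> 'h \<Rightarrow> ('h \<times> 'h \<times> 'h \<times> 'h) fs" where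
  "cop3 \<Delta> h = lext (\<lambda>(x, y, z). fmap (\<lambda>(p, q). (p, q, y, z)) (\<Delta> x)) (cop2 \<Delta> h)"

text \<open>Relations cutting free(A x H x A) down to A \<otimes> H \<otimes> A.\<close>
definition cm_rel :: "(complex \<Rightarrow> 'a::ab_group_add \<Rightarrow> 'a) \<Rightarrow> (complex \<Rightarrow> 'h::ab_group_add \<Rightarrow> 'h)
   \<Rightarrow> ('a \<times> 'h \<times> 'a) fs set" where
  "cm_rel scA scH = trel (lin_rel scA) (trel (lin_rel scH) (lin_rel scA))"

definition cm_mult :: "('h::ring_1 \<Rightarrow> ('h \<times> 'h) fs) \<Rightarrow> ('h \<Rightarrow> 'a::ring_1 \<Rightarrow> 'a)
   \<Rightarrow> ('a \<times> 'h \<times> 'a) fs \<Rightarrow> ('a \<times> 'h \<times> 'a) fs \<Rightarrow> ('a \<times> 'h \<times> 'a) fs" where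
  "cm_mult \<Delta> act = bext (\<lambda>(a, h, b) (a', h', b').
      lext (\<lambda>(h1, h2, h3). gen (a * act h1 a', h2 * h', act h3 b' * b)) (cop2 \<Delta> h))"

definition cm_source :: "'a::ring_1 \<Rightarrow> ('a \<times> 'h::ring_1 \<times> 'a) fs" where
  "cm_source a = gen (a, 1, 1)"

definition cm_target :: "'a::ring_1 \<Rightarrow> ('a \<times> 'h::ring_1 \<times> 'a) fs" where
  "cm_target a = gen (1, 1, a)"

definition cm_tens_A_rel where
  "cm_tens_A_rel scA scH \<Delta> act =
     trel (cm_rel scA scH) (cm_rel scA scH) \<union>
     {tprod (cm_mult \<Delta> act (cm_target a) k) k' - tprod k (cm_mult \<Delta> act (cm_source a) k') | a k k'. True}"

definition cm_tens_Aop_rel where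
  "cm_tens_Aop_rel scA scH \<Delta> act =
     trel (cm_rel scA scH) (cm_rel scA scH) \<union>
     {tprod (cm_mult \<Delta> act k (cm_target a)) k' - tprod k (cm_mult \<Delta> act (cm_target a) k') | a k k'. True}"

definition cm_nu :: "('h::ring_1 \<Rightarrow> ('h \<times> 'h) fs) \<Rightarrow> ('h \<Rightarrow> 'a::ring_1 \<Rightarrow> 'a)
   \<Rightarrow> (('a \<times> 'h \<times> 'a) \<times> ('a \<times> 'h \<times> 'a)) fs \<Rightarrow> (('a \<times> 'h \<times> 'a) \<times> ('a \<times> 'h \<times> 'a)) fs" where
  "cm_nu \<Delta> act = lext (\<lambda>((a, h, b), (a', h', b')).
      lext (\<lambda>(h1, h2, h3, h4). gen ((a, h1, 1), (act h2 a', h3 * h', act h4 b' * b))) (cop3 \<Delta> h))"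

end

theory Submission
  imports Defs
begin

section \<open>Basic linear algebra on formal sums\<close>

lemma lookup_fsc [simp]: "Poly_Mapping.lookup (fsc c f) x = c * Poly_Mapping.lookup f x"
  unfolding fsc_def by (simp add: Poly_Mapping.map.rep_eq when_def)

lemma lookup_gen: "Poly_Mapping.lookup (gen x) y = (if x = y then 1 else 0)"
  unfolding gen_def by (simp add: lookup_single when_def)

lemma keys_gen [simp]: "Poly_Mapping.keys (gen x) = {x}"
  unfolding gen_def by simp

lemma fsc_add: "fsc c (f + g) = fsc c f + fsc c g"
  by (rule poly_mapping_eqI) (simp add: lookup_add distrib_left)

lemma fsc_add_left: "fsc (c + d) f = fsc c f + fsc d f"
  by (rule poly_mapping_eqI) (simp add: lookup_add distrib_right)

lemma fsc_fsc [simp]: "fsc c (fsc d f) = fsc (c * d) f"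
  by (rule poly_mapping_eqI) simp

lemma fsc_one [simp]: "fsc 1 f = f"
  by (rule poly_mapping_eqI) simp

lemma fsc_zero [simp]: "fsc 0 f = 0"
  by (rule poly_mapping_eqI) simp

lemma fsc_zero_right [simp]: "fsc c 0 = 0"
  by (rule poly_mapping_eqI) simp

lemma fsc_minus: "fsc c (- f) = - fsc c f"
  by (rule poly_mapping_eqI) simp

lemma fsc_diff: "fsc c (f - g) = fsc c f - fsc c g"
  by (rule poly_mapping_eqI) (simp add: lookup_minus right_diff_distrib)

lemma fsc_neg_one: "fsc (-1) f = - f"
  by (rule poly_mapping_eqI) simp

lemma fsc_sum: "fsc c (sum g I) = (\<Sum>i\<in>I. fsc c (g i))"
  by (induction I rule: infinite_finite_induct) (auto simp: fsc_add)

lemma lext_superset: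
  assumes "finite D" "Poly_Mapping.keys f \<subseteq> D"
  shows "lext g f = (\<Sum>x\<in>D. fsc (Poly_Mapping.lookup f x) (g x))"
  unfolding lext_def
  by (rule sum.mono_neutral_left) (use assms in \<open>auto simp: in_keys_iff\<close>)

lemma lext_gen [simp]: "lext g (gen x) = g x"
  unfolding lext_def by (simp add: lookup_gen)

lemma lext_zero [simp]: "lext g 0 = 0"
  unfolding lext_def by simp

lemma lext_add: "lext g (f1 + f2) = lext g f1 + lext g f2"
proof -
  let ?D = "Poly_Mapping.keys f1 \<union> Poly_Mapping.keys f2"
  have "lext g (f1 + f2) = (\<Sum>x\<in>?D. fsc (Poly_Mapping.lookup (f1 + f2) x) (g x))"
    by (rule lext_superset) (auto simp: keys_add)
  also have "\<dots> = (\<Sum>x\<in>?D. fsc (Poly_Mapping.lookup f1 x) (g x)) + (\<Sum>x\<in>?D. fsc (Poly_Mapping.lookup f2 x) (g x))"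
    by (simp add: lookup_add fsc_add_left sum.distrib)
  also have "\<dots> = lext g f1 + lext g f2"
    by (subst (1 2) lext_superset[of ?D]) auto
  finally show ?thesis .
qed

lemma lext_fsc: "lext g (fsc c f) = fsc c (lext g f)"
proof -
  have "lext g (fsc c f) = (\<Sum>x\<in>Poly_Mapping.keys f. fsc (Poly_Mapping.lookup (fsc c f) x) (g x))"
    by (rule lext_superset) (auto simp: in_keys_iff)
  then show ?thesis by (simp add: lext_def fsc_sum)
qed

lemma lext_minus: "lext g (- f) = - lext g f"
  using lext_fsc[of g "-1" f] by (simp add: fsc_neg_one)

lemma lext_diff: "lext g (f1 - f2) = lext g f1 - lext g f2"
  using lext_add[of g f1 "- f2"] by (simp add: lext_minus)

lemma lext_sum: "lext g (sum F I) = (\<Sum>i\<in>I. lext g (F i))"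
  by (induction I rule: infinite_finite_induct) (auto simp: lext_add)

lemma lext_fadd: "lext (\<lambda>x. g1 x + g2 x) f = lext g1 f + lext g2 f"
  unfolding lext_def by (simp add: fsc_add sum.distrib)

lemma lext_ffsc: "lext (\<lambda>x. fsc c (g x)) f = fsc c (lext g f)"
  unfolding lext_def by (simp add: fsc_sum mult.commute)

lemma lext_fminus: "lext (\<lambda>x. - g x) f = - lext g f"
  unfolding lext_def by (simp add: fsc_minus sum_negf)

lemma lext_fdiff: "lext (\<lambda>x. g1 x - g2 x) f = lext g1 f - lext g2 f"
  unfolding lext_def by (simp add: fsc_diff sum_subtractf)

lemma lext_fzero [simp]: "lext (\<lambda>x. 0) f = 0"
  unfolding lext_def by simp

lemma lext_cong: "(\<And>x. x \<in> Poly_Mapping.keys f \<Longrightarrow> g x = g' x) \<Longrightarrow> lext g f = lext g' f"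
  unfolding lext_def by simp

lemma fs_expansion: "lext gen f = f"
proof -
  have *: "finite I \<Longrightarrow> Poly_Mapping.lookup (\<Sum>i\<in>I. fsc (Poly_Mapping.lookup f i) (gen i)) j =
            (if j \<in> I then Poly_Mapping.lookup f j else 0)" for I j
    by (induction I rule: finite_induct) (auto simp: lookup_gen lookup_add)
  show ?thesis
    unfolding lext_def
    by (rule poly_mapping_eqI) (fastforce simp add: in_keys_iff *)
qed

lemma lext_comp: "lext F (lext g f) = lext (\<lambda>x. lext F (g x)) f"
  unfolding lext_def[of g] by (simp add: lext_sum lext_fsc lext_def[of "\<lambda>x. lext F (g x)"])

lemma lext_swap: "lext (\<lambda>x. lext (\<lambda>y. F x y) g) f = lext (\<lambda>y. lext (\<lambda>x. F x y) f) g"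
  unfolding lext_def by (simp add: fsc_sum mult.commute sum.swap[of _ "Poly_Mapping.keys f"])

lemma fs_induct:
  assumes "P 0" "\<And>x. P (gen x)" "\<And>f g. P f \<Longrightarrow> P g \<Longrightarrow> P (f + g)" "\<And>c f. P f \<Longrightarrow> P (fsc c f)"
  shows "P f"
proof -
  have "finite I \<Longrightarrow> P (\<Sum>x\<in>I. fsc (Poly_Mapping.lookup f x) (gen x))" for I
    by (induction I rule: finite_induct) (auto intro: assms)
  then have "P (lext gen f)" unfolding lext_def by simp
  then show ?thesis by (simp add: fs_expansion)
qed

lemma bext_alt: "bext g f1 f2 = lext (\<lambda>x. lext (g x) f2) f1"
  unfolding bext_def lext_def by (simp add: fsc_sum)

lemma tprod_alt: "tprod f g = lext (\<lambda>x. lext (\<lambda>y. gen (x, y)) g) f"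
  unfolding tprod_def bext_alt by simp

lemma tprod_gen_right: "tprod f (gen w) = lext (\<lambda>x. gen (x, w)) f"
  unfolding tprod_alt by simp

lemma tprod_gen_left: "tprod (gen v) f = lext (\<lambda>y. gen (v, y)) f"
  unfolding tprod_alt by simp

lemma tprod_gen_gen [simp]: "tprod (gen v) (gen w) = gen (v, w)"
  unfolding tprod_alt by simp

lemma tprod_add1: "tprod (f1 + f2) g = tprod f1 g + tprod f2 g"
  unfolding tprod_alt by (simp add: lext_add)
lemma tprod_fsc1: "tprod (fsc c f) g = fsc c (tprod f g)"
  unfolding tprod_alt by (simp add: lext_fsc)
lemma tprod_add2: "tprod f (g1 + g2) = tprod f g1 + tprod f g2"
  unfolding tprod_alt by (simp add: lext_add lext_fadd)
lemma tprod_fsc2: "tprod f (fsc c g) = fsc c (tprod f g)"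
  unfolding tprod_alt by (simp add: lext_fsc lext_ffsc)
lemma tprod_diff1: "tprod (f1 - f2) g = tprod f1 g - tprod f2 g"
  unfolding tprod_alt by (simp add: lext_diff)
lemma tprod_diff2: "tprod f (g1 - g2) = tprod f g1 - tprod f g2"
  unfolding tprod_alt by (simp add: lext_diff lext_fdiff)

lemma bext_gen_gen [simp]: "bext g (gen x) (gen y) = g x y"
  unfolding bext_alt by simp
lemma bext_add1: "bext g (f1 + f2) f = bext g f1 f + bext g f2 f"
  unfolding bext_alt by (simp add: lext_add)
lemma bext_fsc1: "bext g (fsc c f1) f = fsc c (bext g f1 f)"
  unfolding bext_alt by (simp add: lext_fsc)
lemma bext_add2: "bext g f (f1 + f2) = bext g f f1 + bext g f f2"
  unfolding bext_alt by (simp add: lext_add lext_fadd)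
lemma bext_fsc2: "bext g f (fsc c f1) = fsc c (bext g f f1)"
  unfolding bext_alt by (simp add: lext_fsc lext_ffsc)
lemma bext_zero1 [simp]: "bext g 0 f = 0"
  unfolding bext_alt by simp
lemma bext_zero2 [simp]: "bext g f 0 = 0"
  unfolding bext_alt by simp
lemma tprod_zero1 [simp]: "tprod 0 f = 0"
  unfolding tprod_alt by simp
lemma tprod_zero2 [simp]: "tprod f 0 = 0"
  unfolding tprod_alt by simp

section \<open>Subspaces\<close>

definition subsp :: "'a fs set \<Rightarrow> bool" where
  "subsp V \<longleftrightarrow> 0 \<in> V \<and> (\<forall>x\<in>V. \<forall>y\<in>V. x + y \<in> V) \<and> (\<forall>c. \<forall>x\<in>V. fsc c x \<in> V)"

lemma subsp_zero: "subsp V \<Longrightarrow> 0 \<in> V" unfolding subsp_def by blast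
lemma subsp_add: "subsp V \<Longrightarrow> x \<in> V \<Longrightarrow> y \<in> V \<Longrightarrow> x + y \<in> V" unfolding subsp_def by blast
lemma subsp_fsc: "subsp V \<Longrightarrow> x \<in> V \<Longrightarrow> fsc c x \<in> V" unfolding subsp_def by blast
lemma subsp_uminus: "subsp V \<Longrightarrow> x \<in> V \<Longrightarrow> - x \<in> V"
  using subsp_fsc[of V x "-1"] by (simp add: fsc_neg_one)
lemma subsp_diff: "subsp V \<Longrightarrow> x \<in> V \<Longrightarrow> y \<in> V \<Longrightarrow> x - y \<in> V"
  using subsp_add[of V x "- y"] subsp_uminus[of V y] by simp
lemma subsp_sum: "subsp V \<Longrightarrow> (\<And>i. i \<in> I \<Longrightarrow> g i \<in> V) \<Longrightarrow> sum g I \<in> V"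
  by (induction I rule: infinite_finite_induct) (auto intro: subsp_add subsp_zero)

lemma lext_mem: "subsp V \<Longrightarrow> (\<And>x. x \<in> Poly_Mapping.keys f \<Longrightarrow> g x \<in> V) \<Longrightarrow> lext g f \<in> V"
  unfolding lext_def by (auto intro!: subsp_sum subsp_fsc)

lemma fspan_sum_ext:
  assumes "finite F" "F \<subseteq> G" "finite G"
  shows "(\<Sum>r\<in>F. fsc (c r) r) = (\<Sum>r\<in>G. fsc (if r \<in> F then c r else 0) r)"
proof -
  have "(\<Sum>r\<in>F. fsc (c r) r) = (\<Sum>r\<in>F. fsc (if r \<in> F then c r else 0) r)" by simp
  also have "\<dots> = (\<Sum>r\<in>G. fsc (if r \<in> F then c r else 0) r)"
    by (rule sum.mono_neutral_left) (use assms in auto)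
  finally show ?thesis .
qed

lemma subsp_fspan: "subsp (fspan R)"
  unfolding subsp_def
proof (intro conjI ballI allI)
  show "0 \<in> fspan R" unfolding fspan_def mem_Collect_eq
    by (rule exI[where x="{}"], rule exI[where x="\<lambda>_. 1"]) simp
next
  fix x y assume "x \<in> fspan R" "y \<in> fspan R"
  then obtain F1 c1 F2 c2 where 1: "x = (\<Sum>r\<in>F1. fsc (c1 r) r)" "finite F1" "F1 \<subseteq> R"
    and 2: "y = (\<Sum>r\<in>F2. fsc (c2 r) r)" "finite F2" "F2 \<subseteq> R"
    unfolding fspan_def by blast
  let ?c = "\<lambda>r. (if r \<in> F1 then c1 r else 0) + (if r \<in> F2 then c2 r else 0)"
  have "x + y = (\<Sum>r\<in>F1 \<union> F2. fsc (?c r) r)"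
    unfolding 1 2 fsc_add_left sum.distrib
    by (subst (1 2) fspan_sum_ext[where G = "F1 \<union> F2"]) (use 1 2 in auto)
  then show "x + y \<in> fspan R" unfolding fspan_def mem_Collect_eq using 1 2
    by (intro exI[where x="F1 \<union> F2"] exI[where x="?c"]) simp
next
  fix c x assume "x \<in> fspan R"
  then obtain F1 c1 where 1: "x = (\<Sum>r\<in>F1. fsc (c1 r) r)" "finite F1" "F1 \<subseteq> R"
    unfolding fspan_def by blast
  have "fsc c x = (\<Sum>r\<in>F1. fsc (c * c1 r) r)" unfolding 1 by (simp add: fsc_sum)
  then show "fsc c x \<in> fspan R" unfolding fspan_def mem_Collect_eq using 1
    by (intro exI[where x="F1"] exI[where x="\<lambda>r. c * c1 r"]) simp
qed

lemma fspan_base: "r \<in> R \<Longrightarrow> r \<in> fspan R"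
  unfolding fspan_def mem_Collect_eq
  by (rule exI[where x="{r}"], rule exI[where x="\<lambda>_. 1"]) simp

lemma fspan_least:
  assumes "subsp V" "R \<subseteq> V" "x \<in> fspan R"
  shows "x \<in> V"
proof -
  obtain F c where 1: "x = (\<Sum>r\<in>F. fsc (c r) r)" "finite F" "F \<subseteq> R"
    using assms(3) unfolding fspan_def by blast
  show ?thesis unfolding 1 using 1 assms(1,2) by (auto intro!: subsp_sum subsp_fsc)
qed

lemma lext_fspan:
  assumes "subsp V" "\<And>r. r \<in> R \<Longrightarrow> lext F r \<in> V" "x \<in> fspan R"
  shows "lext F x \<in> V"
proof -
  have "subsp {x. lext F x \<in> V}"
    using assms(1) unfolding subsp_def by (auto simp: lext_add lext_fsc)
  then show ?thesis using fspan_least[of "{x. lext F x \<in> V}" R x] assms by auto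
qed

definition swp :: "('h \<Rightarrow> ('h \<times> 'h) fs) \<Rightarrow> ('h \<Rightarrow> 'h \<Rightarrow> 'b fs) \<Rightarrow> 'h \<Rightarrow> 'b fs" where
  "swp D \<Phi> h = lext (\<lambda>p. \<Phi> (fst p) (snd p)) (D h)"

definition linm :: "(complex \<Rightarrow> 'x \<Rightarrow> 'x) \<Rightarrow> 'b fs set \<Rightarrow> ('x::plus \<Rightarrow> 'b fs) \<Rightarrow> bool" where
  "linm sc V f \<longleftrightarrow> (\<forall>x y. f (x + y) - f x - f y \<in> V) \<and> (\<forall>c x. f (sc c x) - fsc c (f x) \<in> V)"

definition exl :: "(complex \<Rightarrow> 'x \<Rightarrow> 'x) \<Rightarrow> (complex \<Rightarrow> 'y \<Rightarrow> 'y) \<Rightarrow> ('x::plus \<Rightarrow> 'y::plus) \<Rightarrow> bool" where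
  "exl sc sc' f \<longleftrightarrow> (\<forall>x y. f (x + y) = f x + f y) \<and> (\<forall>c x. f (sc c x) = sc' c (f x))"

lemma linmI: "(\<And>x y. f (x + y) - f x - f y \<in> V) \<Longrightarrow> (\<And>c x. f (sc c x) - fsc c (f x) \<in> V) \<Longrightarrow> linm sc V f"
  unfolding linm_def by blast

lemma linm_comp: "linm sc' V G \<Longrightarrow> exl sc sc' f \<Longrightarrow> linm sc V (\<lambda>x. G (f x))"
  unfolding linm_def exl_def by simp

lemma exl_id: "exl sc sc (\<lambda>x. x)" unfolding exl_def by simp

lemma linm_zero:
  fixes G :: "'x::monoid_add \<Rightarrow> 'b fs"
  assumes "subsp V" "linm sc V G"
  shows "G 0 \<in> V"
proof -
  have "G (0 + 0) - G 0 - G 0 \<in> V" using assms(2) unfolding linm_def by blast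
  moreover have "G (0 + 0) - G 0 - G 0 = - G 0" by simp
  ultimately have "- G 0 \<in> V" by metis
  then show ?thesis using subsp_uminus[OF assms(1)] by fastforce
qed

lemma linm_sum:
  assumes V: "subsp V" and G: "linm sc V G" and vs: "vector_space sc"
  shows "G (\<Sum>x\<in>I. sc (c x) (v x)) - (\<Sum>x\<in>I. fsc (c x) (G (v x))) \<in> V"
proof (induction I rule: infinite_finite_induct)
  case (infinite A)
  then show ?case using linm_zero[OF V G] by simp
next
  case empty
  then show ?case using linm_zero[OF V G] by simp
next
  case (insert x F)
  let ?s = "\<Sum>x\<in>F. sc (c x) (v x)"
  have 1: "G (sc (c x) (v x) + ?s) - G (sc (c x) (v x)) - G ?s \<in> V"
    using G unfolding linm_def by blast
  have 2: "G (sc (c x) (v x)) - fsc (c x) (G (v x)) \<in> V"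
    using G unfolding linm_def by blast
  have "G (sc (c x) (v x) + ?s) - (fsc (c x) (G (v x)) + (\<Sum>x\<in>F. fsc (c x) (G (v x))))
     = (G (sc (c x) (v x) + ?s) - G (sc (c x) (v x)) - G ?s) + (G (sc (c x) (v x)) - fsc (c x) (G (v x)))
       + (G ?s - (\<Sum>x\<in>F. fsc (c x) (G (v x))))" by (simp add: algebra_simps)
  also have "\<dots> \<in> V" using 1 2 insert.IH by (intro subsp_add V)
  finally show ?case using insert by simp
qed

lemma feval_superset:
  assumes "vector_space sc" "finite D" "Poly_Mapping.keys f \<subseteq> D"
  shows "feval sc f = (\<Sum>x\<in>D. sc (Poly_Mapping.lookup f x) x)"
proof -
  interpret vector_space sc by fact
  show ?thesis unfolding feval_def
    by (rule sum.mono_neutral_left) (use assms in \<open>auto simp: in_keys_iff\<close>)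
qed

lemma feval_add:
  assumes vs: "vector_space sc"
  shows "feval sc (f1 + f2) = feval sc f1 + feval sc f2"
proof -
  interpret vector_space sc by fact
  let ?D = "Poly_Mapping.keys f1 \<union> Poly_Mapping.keys f2"
  have "feval sc (f1 + f2) = (\<Sum>x\<in>?D. sc (Poly_Mapping.lookup (f1 + f2) x) x)"
    by (rule feval_superset[OF vs]) (auto simp: keys_add)
  also have "\<dots> = (\<Sum>x\<in>?D. sc (Poly_Mapping.lookup f1 x) x) + (\<Sum>x\<in>?D. sc (Poly_Mapping.lookup f2 x) x)"
    by (simp add: lookup_add scale_left_distrib sum.distrib)
  also have "\<dots> = feval sc f1 + feval sc f2"
    by (subst (1 2) feval_superset[OF vs, of ?D]) auto
  finally show ?thesis .
qed

lemma feval_fsc: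
  assumes vs: "vector_space sc"
  shows "feval sc (fsc c f) = sc c (feval sc f)"
proof -
  interpret vector_space sc by fact
  have "feval sc (fsc c f) = (\<Sum>x\<in>Poly_Mapping.keys f. sc (Poly_Mapping.lookup (fsc c f) x) x)"
    by (rule feval_superset[OF vs]) (auto simp: in_keys_iff)
  then show ?thesis by (simp add: feval_def scale_sum_right)
qed

lemma feval_gen:
  assumes vs: "vector_space sc"
  shows "feval sc (gen x) = x"
proof -
  interpret vector_space sc by fact
  show ?thesis unfolding feval_def by (simp add: lookup_gen)
qed

lemma feval_zero [simp]: "feval sc 0 = 0"
  unfolding feval_def by simp

lemma feval_sum:
  assumes vs: "vector_space sc"
  shows "feval sc (sum F I) = (\<Sum>i\<in>I. feval sc (F i))"
  by (induction I rule: infinite_finite_induct) (auto simp: feval_add[OF vs])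

lemma feval_fmap:
  assumes vs: "vector_space sc"
  shows "feval sc (fmap f z) = (\<Sum>x\<in>Poly_Mapping.keys z. sc (Poly_Mapping.lookup z x) (f x))"
  unfolding fmap_def lext_def by (simp add: feval_sum[OF vs] feval_fsc[OF vs] feval_gen[OF vs])

lemma linm_feval:
  assumes V: "subsp V" and G: "linm sc V G" and vs: "vector_space sc"
  shows "G (feval sc (fmap f z)) - lext (\<lambda>p. G (f p)) z \<in> V"
  unfolding feval_fmap[OF vs] lext_def using linm_sum[OF V G vs] .

lemma lin_rel_map:
  assumes V: "subsp V" and r: "r \<in> lin_rel sc" and G: "linm sc V G"
  shows "lext G r \<in> V"
  using r G unfolding lin_rel_def linm_def by (auto simp: lext_diff lext_fsc lext_add)

lemma linm_gen:
  assumes "\<And>r. r \<in> lin_rel sc \<Longrightarrow> lext (\<lambda>x. gen (E x)) r \<in> V"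
  shows "linm sc V (\<lambda>x. gen (E x))"
proof (rule linmI)
  fix x y
  have "gen (x + y) - gen x - gen y \<in> lin_rel sc" unfolding lin_rel_def by blast
  from assms[OF this] show "gen (E (x + y)) - gen (E x) - gen (E y) \<in> V" by (simp add: lext_diff)
next
  fix c x
  have "gen (sc c x) - fsc c (gen x) \<in> lin_rel sc" unfolding lin_rel_def by blast
  from assms[OF this] show "gen (E (sc c x)) - fsc c (gen (E x)) \<in> V" by (simp add: lext_diff lext_fsc)
qed

definition eqv :: "'a fs set \<Rightarrow> 'a fs \<Rightarrow> 'a fs \<Rightarrow> bool" where
  "eqv V x y \<longleftrightarrow> x - y \<in> V"

lemma eqv_trans: "subsp V \<Longrightarrow> eqv V x y \<Longrightarrow> eqv V y z \<Longrightarrow> eqv V x z"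
  unfolding eqv_def using subsp_add[of V "x - y" "y - z"] by simp

lemma eqv_sym: "subsp V \<Longrightarrow> eqv V x y \<Longrightarrow> eqv V y x"
  unfolding eqv_def using subsp_uminus[of V "x - y"] by simp

lemma eqv_refl: "subsp V \<Longrightarrow> eqv V x x"
  unfolding eqv_def using subsp_zero[of V] by simp

lemma eqv_add: "subsp V \<Longrightarrow> eqv V x y \<Longrightarrow> eqv V x' y' \<Longrightarrow> eqv V (x + x') (y + y')"
  unfolding eqv_def using subsp_add[of V "x - y" "x' - y'"] by (simp add: algebra_simps)

lemma eqv_fsc: "subsp V \<Longrightarrow> eqv V x y \<Longrightarrow> eqv V (fsc c x) (fsc c y)"
  unfolding eqv_def using subsp_fsc[of V "x - y" c] by (simp add: fsc_diff)

locale cmctx =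
  fixes scH :: "complex \<Rightarrow> 'h::ring_1 \<Rightarrow> 'h"
    and \<Delta> :: "'h \<Rightarrow> ('h \<times> 'h) fs"
    and \<epsilon> :: "'h \<Rightarrow> complex"
    and S :: "'h \<Rightarrow> 'h"
    and scA :: "complex \<Rightarrow> 'a::ring_1 \<Rightarrow> 'a"
    and act :: "'h \<Rightarrow> 'a \<Rightarrow> 'a"
  assumes hopf: "hopf_algebra scH \<Delta> \<epsilon> S"
    and modalg: "module_algebra scH \<Delta> \<epsilon> scA act"
begin

abbreviation sw where "sw \<equiv> swp \<Delta>"
abbreviation "T2 \<equiv> trel (lin_rel scH) (lin_rel scH)"
abbreviation "T3 \<equiv> trel (lin_rel scH) T2"

lemma algH_all: "\<forall>c x y. scH c (x * y) = scH c x * y \<and> scH c (x * y) = x * scH c y"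
proof -
  have "alg_over_C scH" using hopf unfolding hopf_algebra_def Let_def by (elim conjE)
  then show ?thesis unfolding alg_over_C_def by (elim conjE)
qed

lemma algA_all: "\<forall>c x y. scA c (x * y) = scA c x * y \<and> scA c (x * y) = x * scA c y"
proof -
  have "alg_over_C scA" using modalg unfolding module_algebra_def by (elim conjE)
  then show ?thesis unfolding alg_over_C_def by (elim conjE)
qed

lemma algH1: "scH c (x * y) = scH c x * y" using algH_all by blast
lemma algH2: "scH c (x * y) = x * scH c y" using algH_all by blast
lemma algA1: "scA c (x * y) = scA c x * y" using algA_all by blast
lemma algA2: "scA c (x * y) = x * scA c y" using algA_all by blast

lemma vsH: "vector_space scH"
  and D_add: "\<And>x y. \<Delta> (x + y) - (\<Delta> x + \<Delta> y) \<in> fspan T2"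
  and D_sc: "\<And>c x. \<Delta> (scH c x) - fsc c (\<Delta> x) \<in> fspan T2"
  and coass: "\<And>h. fmap (\<lambda>((x, y), z). (x, y, z)) (lext (\<lambda>(x, y). tprod (\<Delta> x) (gen y)) (\<Delta> h))
        - lext (\<lambda>(x, y). tprod (gen x) (\<Delta> y)) (\<Delta> h) \<in> fspan T3"
  and D_one: "\<Delta> 1 - gen (1, 1) \<in> fspan T2"
  and counitL: "\<And>h. feval scH (fmap (\<lambda>(x, y). scH (\<epsilon> x) y) (\<Delta> h)) = h"
  and counitR: "\<And>h. feval scH (fmap (\<lambda>(x, y). scH (\<epsilon> y) x) (\<Delta> h)) = h"
  and eps_add: "\<And>x y. \<epsilon> (x + y) = \<epsilon> x + \<epsilon> y"
  and eps_sc: "\<And>c x. \<epsilon> (scH c x) = c * \<epsilon> x"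
  and S_add: "\<And>x y. S (x + y) = S x + S y"
  and S_sc: "\<And>c x. S (scH c x) = scH c (S x)"
  and antiL: "\<And>h. feval scH (fmap (\<lambda>(x, y). S x * y) (\<Delta> h)) = scH (\<epsilon> h) 1"
  and antiR: "\<And>h. feval scH (fmap (\<lambda>(x, y). x * S y) (\<Delta> h)) = scH (\<epsilon> h) 1"
  using hopf unfolding hopf_algebra_def Let_def alg_over_C_def fequiv_def by auto

lemma vsA: "vector_space scA"
  and act_add1: "\<And>x y a. act (x + y) a = act x a + act y a"
  and act_sc1: "\<And>c x a. act (scH c x) a = scA c (act x a)"
  and act_add2: "\<And>h a b. act h (a + b) = act h a + act h b"
  and act_sc2: "\<And>h c a. act h (scA c a) = scA c (act h a)"
  and act_mult: "\<And>x y a. act (x * y) a = act x (act y a)"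
  and act_one: "\<And>a. act 1 a = a"
  and act_prod: "\<And>h a b. act h (a * b) = feval scA (fmap (\<lambda>(x, y). act x a * act y b) (\<Delta> h))"
  and act_unit: "\<And>h. act h 1 = scA (\<epsilon> h) 1"
  using modalg unfolding module_algebra_def alg_over_C_def by auto

lemma sw_def': "sw \<Phi> h = lext (\<lambda>p. \<Phi> (fst p) (snd p)) (\<Delta> h)"
  by (simp add: swp_def)

lemma sw_diff: "sw \<Phi> h - sw \<Psi> h = sw (\<lambda>x y. \<Phi> x y - \<Psi> x y) h"
  unfolding swp_def by (simp add: lext_fdiff)

lemma sw_cong:
  assumes V: "subsp V" and "\<And>x y. eqv V (\<Phi> x y) (\<Psi> x y)"
  shows "eqv V (sw \<Phi> h) (sw \<Psi> h)"
  unfolding eqv_def sw_diff unfolding swp_def using assms unfolding eqv_def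
  by (intro lext_mem V) auto

lemma T2_map:
  assumes V: "subsp V" and l1: "\<And>y. linm scH V (\<lambda>x. \<Phi> x y)" and l2: "\<And>x. linm scH V (\<Phi> x)"
    and r: "r \<in> T2"
  shows "lext (\<lambda>p. \<Phi> (fst p) (snd p)) r \<in> V"
  using r unfolding trel_def
proof (elim UnE CollectE exE conjE)
  fix r1 w assume "r = tprod r1 (gen w)" "r1 \<in> lin_rel scH"
  then show ?thesis using lin_rel_map[OF V _ l1] by (simp add: tprod_gen_right lext_comp)
next
  fix v r1 assume "r = tprod (gen v) r1" "r1 \<in> lin_rel scH"
  then show ?thesis using lin_rel_map[OF V _ l2] by (simp add: tprod_gen_left lext_comp)
qed

lemma sw_lin:
  assumes V: "subsp V" and l1: "\<And>y. linm scH V (\<lambda>x. \<Phi> x y)" and l2: "\<And>x. linm scH V (\<Phi> x)"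
  shows "linm scH V (sw \<Phi>)"
proof (rule linmI)
  fix x y
  have "lext (\<lambda>p. \<Phi> (fst p) (snd p)) (\<Delta> (x + y) - (\<Delta> x + \<Delta> y)) \<in> V"
    by (rule lext_fspan[OF V T2_map[OF V l1 l2] D_add])
  then show "sw \<Phi> (x + y) - sw \<Phi> x - sw \<Phi> y \<in> V"
    by (simp add: swp_def lext_diff lext_add algebra_simps)
next
  fix c x
  have "lext (\<lambda>p. \<Phi> (fst p) (snd p)) (\<Delta> (scH c x) - fsc c (\<Delta> x)) \<in> V"
    by (rule lext_fspan[OF V T2_map[OF V l1 l2] D_sc])
  then show "sw \<Phi> (scH c x) - fsc c (sw \<Phi> x) \<in> V"
    by (simp add: swp_def lext_diff lext_fsc)
qed

lemma sw_lin_comp: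
  assumes V: "subsp V" and l1: "\<And>y. linm scH V (\<lambda>x. \<Phi> x y)" and l2: "\<And>x. linm scH V (\<Phi> x)"
    and g: "exl sc scH g"
  shows "linm sc V (\<lambda>t. sw \<Phi> (g t))"
  using linm_comp[OF sw_lin[OF V l1 l2] g] .

lemma sw_lin_param:
  assumes V: "subsp V" and l: "\<And>x y. linm sc V (\<lambda>t. \<Phi> t x y)"
  shows "linm sc V (\<lambda>t. sw (\<Phi> t) h)"
proof (rule linmI)
  fix s t
  show "sw (\<Phi> (s + t)) h - sw (\<Phi> s) h - sw (\<Phi> t) h \<in> V"
    unfolding sw_diff unfolding swp_def
    using l unfolding linm_def by (intro lext_mem V) auto
next
  fix c s
  have "sw (\<Phi> (sc c s)) h - fsc c (sw (\<Phi> s) h) = sw (\<lambda>x y. \<Phi> (sc c s) x y - fsc c (\<Phi> s x y)) h"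
    unfolding swp_def by (simp add: lext_fdiff lext_ffsc)
  also have "\<dots> \<in> V" unfolding swp_def
    using l unfolding linm_def by (intro lext_mem V) auto
  finally show "sw (\<Phi> (sc c s)) h - fsc c (sw (\<Phi> s) h) \<in> V" .
qed

lemma sw_fsc: "fsc c (sw \<Phi> h) = sw (\<lambda>x y. fsc c (\<Phi> x y)) h"
  by (simp add: swp_def lext_ffsc)

lemma lin_eps: "subsp V \<Longrightarrow> linm scH V (\<lambda>t. fsc (\<epsilon> t) X)"
  unfolding linm_def by (simp add: eps_add eps_sc fsc_add_left subsp_zero)

lemma lin_fscR: "subsp V \<Longrightarrow> linm sc V F \<Longrightarrow> linm sc V (\<lambda>t. fsc c (F t))"
  unfolding linm_def
proof (intro conjI allI)
  fix x y assume V: "subsp V" and F: "(\<forall>x y. F (x + y) - F x - F y \<in> V) \<and> (\<forall>c x. F (sc c x) - fsc c (F x) \<in> V)"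
  have "fsc c (F (x + y) - F x - F y) \<in> V" using F by (intro subsp_fsc[OF V]) blast
  then show "fsc c (F (x + y)) - fsc c (F x) - fsc c (F y) \<in> V" by (simp add: fsc_diff)
next
  fix d x assume V: "subsp V" and F: "(\<forall>x y. F (x + y) - F x - F y \<in> V) \<and> (\<forall>c x. F (sc c x) - fsc c (F x) \<in> V)"
  have "fsc c (F (sc d x) - fsc d (F x)) \<in> V" using F by (intro subsp_fsc[OF V]) blast
  then show "fsc c (F (sc d x)) - fsc d (fsc c (F x)) \<in> V" by (simp add: fsc_diff mult.commute)
qed

lemma sw_lext: "lext g (sw \<Phi> h) = sw (\<lambda>x y. lext g (\<Phi> x y)) h"
  unfolding swp_def by (simp add: lext_comp)

lemma sw_tprod1: "tprod (sw \<Phi> h) (gen w) = sw (\<lambda>x y. tprod (\<Phi> x y) (gen w)) h"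
  unfolding tprod_gen_right sw_lext ..

lemma sw_tprod2: "tprod (gen v) (sw \<Phi> h) = sw (\<lambda>x y. tprod (gen v) (\<Phi> x y)) h"
  unfolding tprod_gen_left sw_lext ..

lemma cop2_sw: "lext F (cop2 \<Delta> h) = sw (\<lambda>u v. sw (\<lambda>p q. F (p, q, v)) u) h"
  unfolding cop2_def fmap_def swp_def
  by (simp add: lext_comp tprod_gen_right split_def)

lemma cop3_sw: "lext F (cop3 \<Delta> h) = sw (\<lambda>u v. sw (\<lambda>y z. sw (\<lambda>p q. F (p, q, z, v)) y) u) h"
  unfolding cop3_def lext_comp cop2_sw fmap_def
  by (simp add: lext_comp swp_def split_def)


lemma T3_map:
  assumes V: "subsp V"
    and l1: "\<And>q v. linm scH V (\<lambda>p. G p q v)"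
    and l2: "\<And>p v. linm scH V (\<lambda>q. G p q v)"
    and l3: "\<And>p q. linm scH V (\<lambda>v. G p q v)"
    and r: "r \<in> T3"
  shows "lext (\<lambda>(x, y, z). G x y z) r \<in> V"
  using r unfolding trel_def[of "lin_rel scH" T2]
proof (elim UnE CollectE exE conjE)
  fix r1 w assume "r = tprod r1 (gen w)" "r1 \<in> lin_rel scH"
  then show ?thesis using lin_rel_map[OF V _ l1] by (simp add: tprod_gen_right lext_comp split_def)
next
  fix v r1 assume r: "r = tprod (gen v) r1" "r1 \<in> T2"
  from r(2) show ?thesis unfolding trel_def
  proof (elim UnE CollectE exE conjE)
    fix r2 w assume "r1 = tprod r2 (gen w)" "r2 \<in> lin_rel scH"
    then show ?thesis using r(1) lin_rel_map[OF V _ l2] by (simp add: tprod_gen_right tprod_gen_left lext_comp split_def)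
  next
    fix v' r2 assume "r1 = tprod (gen v') r2" "r2 \<in> lin_rel scH"
    then show ?thesis using r(1) lin_rel_map[OF V _ l3] by (simp add: tprod_gen_right tprod_gen_left lext_comp split_def)
  qed
qed

lemma CA:
  assumes V: "subsp V"
    and l1: "\<And>q v. linm scH V (\<lambda>p. G p q v)"
    and l2: "\<And>p v. linm scH V (\<lambda>q. G p q v)"
    and l3: "\<And>p q. linm scH V (\<lambda>v. G p q v)"
  shows "eqv V (sw (\<lambda>u v. sw (\<lambda>p q. G p q v) u) h) (sw (\<lambda>u v. sw (\<lambda>p q. G u p q) v) h)"
proof -
  let ?F = "\<lambda>(x, y, z). G x y z"
  have 1: "sw (\<lambda>u v. sw (\<lambda>p q. G p q v) u) h = lext ?F (cop2 \<Delta> h)"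
    by (simp add: cop2_sw)
  have 2: "sw (\<lambda>u v. sw (\<lambda>p q. G u p q) v) h = lext ?F (lext (\<lambda>(x, y). tprod (gen x) (\<Delta> y)) (\<Delta> h))"
    by (simp add: swp_def lext_comp tprod_gen_left split_def)
  have "lext ?F (cop2 \<Delta> h - lext (\<lambda>(x, y). tprod (gen x) (\<Delta> y)) (\<Delta> h)) \<in> V"
    by (rule lext_fspan[where R=T3, OF V T3_map[OF V l1 l2 l3]]) (assumption, unfold cop2_def, rule coass)
  then show ?thesis unfolding eqv_def 1 2 by (simp add: lext_diff)
qed

lemma counit_L:
  assumes V: "subsp V" and G: "linm scH V G"
  shows "eqv V (sw (\<lambda>x y. fsc (\<epsilon> x) (G y)) h) (G h)"
proof -
  have 1: "G h - lext (\<lambda>p. G (scH (\<epsilon> (fst p)) (snd p))) (\<Delta> h) \<in> V"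
    using linm_feval[OF V G vsH, of "\<lambda>(x, y). scH (\<epsilon> x) y" "\<Delta> h"] counitL[of h]
    by (simp add: split_def)
  have 2: "sw (\<lambda>x y. fsc (\<epsilon> x) (G y)) h - lext (\<lambda>p. G (scH (\<epsilon> (fst p)) (snd p))) (\<Delta> h) \<in> V"
    unfolding swp_def lext_fdiff[symmetric] using G unfolding linm_def
    by (intro lext_mem V) (metis V minus_diff_eq subsp_uminus)
  show ?thesis unfolding eqv_def using subsp_diff[OF V 2 1] by simp
qed

lemma counit_R:
  assumes V: "subsp V" and G: "linm scH V G"
  shows "eqv V (sw (\<lambda>x y. fsc (\<epsilon> y) (G x)) h) (G h)"
proof -
  have 1: "G h - lext (\<lambda>p. G (scH (\<epsilon> (snd p)) (fst p))) (\<Delta> h) \<in> V"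
    using linm_feval[OF V G vsH, of "\<lambda>(x, y). scH (\<epsilon> y) x" "\<Delta> h"] counitR[of h]
    by (simp add: split_def)
  have 2: "sw (\<lambda>x y. fsc (\<epsilon> y) (G x)) h - lext (\<lambda>p. G (scH (\<epsilon> (snd p)) (fst p))) (\<Delta> h) \<in> V"
    unfolding swp_def lext_fdiff[symmetric] using G unfolding linm_def
    by (intro lext_mem V) (metis V minus_diff_eq subsp_uminus)
  show ?thesis unfolding eqv_def using subsp_diff[OF V 2 1] by simp
qed

lemma antipode_L:
  assumes V: "subsp V" and G: "linm scH V G"
  shows "eqv V (sw (\<lambda>x y. G (S x * y)) h) (fsc (\<epsilon> h) (G 1))"
proof -
  have 1: "G (scH (\<epsilon> h) 1) - lext (\<lambda>p. G (S (fst p) * snd p)) (\<Delta> h) \<in> V"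
    using linm_feval[OF V G vsH, of "\<lambda>(x, y). S x * y" "\<Delta> h"] antiL[of h]
    by (simp add: split_def)
  have 2: "G (scH (\<epsilon> h) 1) - fsc (\<epsilon> h) (G 1) \<in> V" using G unfolding linm_def by blast
  show ?thesis unfolding eqv_def swp_def using subsp_diff[OF V 2 1] by simp
qed

lemma antipode_R:
  assumes V: "subsp V" and G: "linm scH V G"
  shows "eqv V (sw (\<lambda>x y. G (x * S y)) h) (fsc (\<epsilon> h) (G 1))"
proof -
  have 1: "G (scH (\<epsilon> h) 1) - lext (\<lambda>p. G (fst p * S (snd p))) (\<Delta> h) \<in> V"
    using linm_feval[OF V G vsH, of "\<lambda>(x, y). x * S y" "\<Delta> h"] antiR[of h]
    by (simp add: split_def)
  have 2: "G (scH (\<epsilon> h) 1) - fsc (\<epsilon> h) (G 1) \<in> V" using G unfolding linm_def by blast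
  show ?thesis unfolding eqv_def swp_def using subsp_diff[OF V 2 1] by simp
qed

lemma act_prod_eqv:
  assumes V: "subsp V" and G: "linm scA V G"
  shows "eqv V (G (act h (a * b))) (sw (\<lambda>x y. G (act x a * act y b)) h)"
  using linm_feval[OF V G vsA, of "\<lambda>(x, y). act x a * act y b" "\<Delta> h"]
  unfolding eqv_def swp_def act_prod by (simp add: split_def)

lemma sw_one:
  assumes V: "subsp V" and l1: "\<And>y. linm scH V (\<lambda>x. \<Phi> x y)" and l2: "\<And>x. linm scH V (\<Phi> x)"
  shows "eqv V (sw \<Phi> 1) (\<Phi> 1 1)"
proof -
  have "lext (\<lambda>p. \<Phi> (fst p) (snd p)) (\<Delta> 1 - gen (1, 1)) \<in> V"
    by (rule lext_fspan[OF V T2_map[OF V l1 l2] D_one])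
  then show ?thesis unfolding eqv_def swp_def by (simp add: lext_diff)
qed

lemma cop2_one:
  assumes V: "subsp V"
    and l1: "\<And>q v. linm scH V (\<lambda>p. G p q v)"
    and l2: "\<And>p v. linm scH V (\<lambda>q. G p q v)"
    and l3: "\<And>p q. linm scH V (\<lambda>v. G p q v)"
  shows "eqv V (sw (\<lambda>u v. sw (\<lambda>p q. G p q v) u) 1) (G 1 1 1)"
proof -
  note eqv_trans[OF V, trans]
  have "eqv V (sw (\<lambda>u v. sw (\<lambda>p q. G p q v) u) 1) (sw (\<lambda>p q. G p q 1) 1)"
    by (rule sw_one[OF V]) (auto intro!: sw_lin sw_lin_param V l1 l2 l3)
  also have "eqv V \<dots> (G 1 1 1)"
    by (rule sw_one[OF V]) (auto intro!: l1 l2)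
  finally show ?thesis .
qed

end

context cmctx
begin

abbreviation "CR \<equiv> cm_rel scA scH"
abbreviation "TT \<equiv> trel CR CR"

lemma cr1: "r \<in> lin_rel scA \<Longrightarrow> lext (\<lambda>x. gen (x, h, b)) r \<in> CR"
  unfolding cm_rel_def trel_def[of "lin_rel scA"] by (auto simp: tprod_gen_right)

lemma cr2: "r \<in> lin_rel scH \<Longrightarrow> lext (\<lambda>x. gen (a, x, b)) r \<in> CR"
proof -
  assume r: "r \<in> lin_rel scH"
  have "lext (\<lambda>x. gen (a, x, b)) r = tprod (gen a) (tprod r (gen b))"
    by (simp add: tprod_gen_right tprod_gen_left lext_comp)
  moreover have "tprod r (gen b) \<in> trel (lin_rel scH) (lin_rel scA)" using r unfolding trel_def by blast
  ultimately show ?thesis unfolding cm_rel_def trel_def[of "lin_rel scA"] by blast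
qed

lemma cr3: "r \<in> lin_rel scA \<Longrightarrow> lext (\<lambda>x. gen (a, h, x)) r \<in> CR"
proof -
  assume r: "r \<in> lin_rel scA"
  have "lext (\<lambda>x. gen (a, h, x)) r = tprod (gen a) (tprod (gen h) r)"
    by (simp add: tprod_gen_left lext_comp)
  moreover have "tprod (gen h) r \<in> trel (lin_rel scH) (lin_rel scA)" using r unfolding trel_def by blast
  ultimately show ?thesis unfolding cm_rel_def trel_def[of "lin_rel scA"] by blast
qed

lemma ttl: "q \<in> CR \<Longrightarrow> lext (\<lambda>p. gen (p, k)) q \<in> TT"
proof -
  assume "q \<in> CR"
  moreover have "lext (\<lambda>p. gen (p, k)) q = tprod q (gen k)" by (simp add: tprod_gen_right)
  ultimately show ?thesis unfolding trel_def[of CR] by blast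
qed

lemma ttr: "q \<in> CR \<Longrightarrow> lext (\<lambda>p. gen (k, p)) q \<in> TT"
proof -
  assume "q \<in> CR"
  moreover have "lext (\<lambda>p. gen (k, p)) q = tprod (gen k) q" by (simp add: tprod_gen_left)
  ultimately show ?thesis unfolding trel_def[of CR] by blast
qed

context
  fixes V assumes V: "subsp V" and TTV: "TT \<subseteq> V"
begin

lemma slot1: assumes "exl sc scA f" shows "linm sc V (\<lambda>t. gen ((f t, h, b), k))"
proof (rule linm_comp[OF _ assms], rule linm_gen)
  fix r assume r: "r \<in> lin_rel scA"
  have "lext (\<lambda>x. gen ((x, h, b), k)) r = lext (\<lambda>p. gen (p, k)) (lext (\<lambda>x. gen (x, h, b)) r)"
    by (simp add: lext_comp)
  also have "\<dots> \<in> TT" by (rule ttl[OF cr1[OF r]])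
  finally show "lext (\<lambda>x. gen ((x, h, b), k)) r \<in> V" using TTV by blast
qed

lemma slot2: assumes "exl sc scH f" shows "linm sc V (\<lambda>t. gen ((a, f t, b), k))"
proof (rule linm_comp[OF _ assms], rule linm_gen)
  fix r assume r: "r \<in> lin_rel scH"
  have "lext (\<lambda>x. gen ((a, x, b), k)) r = lext (\<lambda>p. gen (p, k)) (lext (\<lambda>x. gen (a, x, b)) r)"
    by (simp add: lext_comp)
  also have "\<dots> \<in> TT" by (rule ttl[OF cr2[OF r]])
  finally show "lext (\<lambda>x. gen ((a, x, b), k)) r \<in> V" using TTV by blast
qed

lemma slot3: assumes "exl sc scA f" shows "linm sc V (\<lambda>t. gen ((a, h, f t), k))"
proof (rule linm_comp[OF _ assms], rule linm_gen)
  fix r assume r: "r \<in> lin_rel scA"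
  have "lext (\<lambda>x. gen ((a, h, x), k)) r = lext (\<lambda>p. gen (p, k)) (lext (\<lambda>x. gen (a, h, x)) r)"
    by (simp add: lext_comp)
  also have "\<dots> \<in> TT" by (rule ttl[OF cr3[OF r]])
  finally show "lext (\<lambda>x. gen ((a, h, x), k)) r \<in> V" using TTV by blast
qed

lemma slot4: assumes "exl sc scA f" shows "linm sc V (\<lambda>t. gen (k, (f t, h, b)))"
proof (rule linm_comp[OF _ assms], rule linm_gen)
  fix r assume r: "r \<in> lin_rel scA"
  have "lext (\<lambda>x. gen (k, (x, h, b))) r = lext (\<lambda>p. gen (k, p)) (lext (\<lambda>x. gen (x, h, b)) r)"
    by (simp add: lext_comp)
  also have "\<dots> \<in> TT" by (rule ttr[OF cr1[OF r]])
  finally show "lext (\<lambda>x. gen (k, (x, h, b))) r \<in> V" using TTV by blast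
qed

lemma slot5: assumes "exl sc scH f" shows "linm sc V (\<lambda>t. gen (k, (a, f t, b)))"
proof (rule linm_comp[OF _ assms], rule linm_gen)
  fix r assume r: "r \<in> lin_rel scH"
  have "lext (\<lambda>x. gen (k, (a, x, b))) r = lext (\<lambda>p. gen (k, p)) (lext (\<lambda>x. gen (a, x, b)) r)"
    by (simp add: lext_comp)
  also have "\<dots> \<in> TT" by (rule ttr[OF cr2[OF r]])
  finally show "lext (\<lambda>x. gen (k, (a, x, b))) r \<in> V" using TTV by blast
qed

lemma slot6: assumes "exl sc scA f" shows "linm sc V (\<lambda>t. gen (k, (a, h, f t)))"
proof (rule linm_comp[OF _ assms], rule linm_gen)
  fix r assume r: "r \<in> lin_rel scA"
  have "lext (\<lambda>x. gen (k, (a, h, x))) r = lext (\<lambda>p. gen (k, p)) (lext (\<lambda>x. gen (a, h, x)) r)"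
    by (simp add: lext_comp)
  also have "\<dots> \<in> TT" by (rule ttr[OF cr3[OF r]])
  finally show "lext (\<lambda>x. gen (k, (a, h, x))) r \<in> V" using TTV by blast
qed

end

lemma exl_actL: "exl sc scH f \<Longrightarrow> exl sc scA (\<lambda>t. act (f t) a)"
  unfolding exl_def by (simp add: act_add1 act_sc1)
lemma exl_actR: "exl sc scA f \<Longrightarrow> exl sc scA (\<lambda>t. act x (f t))"
  unfolding exl_def by (simp add: act_add2 act_sc2)
lemma exl_multRA: "exl sc scA f \<Longrightarrow> exl sc scA (\<lambda>t. f t * (c::'a))"
  unfolding exl_def by (simp add: distrib_right algA1)
lemma exl_multLA: "exl sc scA f \<Longrightarrow> exl sc scA (\<lambda>t. (c::'a) * f t)"
  unfolding exl_def by (simp add: distrib_left algA2)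
lemma exl_multRH: "exl sc scH f \<Longrightarrow> exl sc scH (\<lambda>t. f t * (c::'h))"
  unfolding exl_def by (simp add: distrib_right algH1)
lemma exl_multLH: "exl sc scH f \<Longrightarrow> exl sc scH (\<lambda>t. (c::'h) * f t)"
  unfolding exl_def by (simp add: distrib_left algH2)
lemma exl_S: "exl sc scH f \<Longrightarrow> exl sc scH (\<lambda>t. S (f t))"
  unfolding exl_def by (simp add: S_add S_sc)

lemmas exl_rules = exl_id exl_actL exl_actR exl_multRA exl_multLA exl_multRH exl_multLH exl_S

definition nu0 :: "'a \<Rightarrow> 'h \<Rightarrow> 'a \<Rightarrow> 'a \<Rightarrow> 'h \<Rightarrow> 'a \<Rightarrow> (('a \<times> 'h \<times> 'a) \<times> ('a \<times> 'h \<times> 'a)) fs" where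
  "nu0 a h b a' h' b' = sw (\<lambda>u v. sw (\<lambda>y z. sw (\<lambda>p q. gen ((a, p, 1), (act q a', z * h', act v b' * b))) y) u) h"

lemma nu_gen: "cm_nu \<Delta> act (gen ((a, h, b), (a', h', b'))) = nu0 a h b a' h' b'"
  unfolding cm_nu_def nu0_def by (simp add: cop3_sw)

context
  fixes V assumes V: "subsp V" and TTV: "TT \<subseteq> V"
begin

lemmas slots = slot1[OF V TTV] slot2[OF V TTV] slot3[OF V TTV] slot4[OF V TTV] slot5[OF V TTV] slot6[OF V TTV]
lemmas linrules = sw_lin[OF V] sw_lin_comp[OF V] sw_lin_param[OF V] lin_eps[OF V] lin_fscR[OF V] slots exl_rules

lemma nu0_lin:
  "exl sc scA f \<Longrightarrow> linm sc V (\<lambda>t. nu0 (f t) h b a' h' b')"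
  "exl sc scH g \<Longrightarrow> linm sc V (\<lambda>t. nu0 a (g t) b a' h' b')"
  "exl sc scA f \<Longrightarrow> linm sc V (\<lambda>t. nu0 a h (f t) a' h' b')"
  "exl sc scA f \<Longrightarrow> linm sc V (\<lambda>t. nu0 a h b (f t) h' b')"
  "exl sc scH g \<Longrightarrow> linm sc V (\<lambda>t. nu0 a h b a' (g t) b')"
  "exl sc scA f \<Longrightarrow> linm sc V (\<lambda>t. nu0 a h b a' h' (f t))"
  unfolding nu0_def by (intro linrules | assumption)+

end

end

context cmctx
begin

abbreviation "NA \<equiv> cm_tens_A_rel scA scH \<Delta> act"
abbreviation "Nop \<equiv> cm_tens_Aop_rel scA scH \<Delta> act"
abbreviation "VA \<equiv> fspan NA"
abbreviation "Vop \<equiv> fspan Nop"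

lemma VA: "subsp VA" by (rule subsp_fspan)
lemma Vop: "subsp Vop" by (rule subsp_fspan)
lemma TT_VA: "TT \<subseteq> VA" using fspan_base unfolding cm_tens_A_rel_def by blast
lemma TT_Vop: "TT \<subseteq> Vop" using fspan_base unfolding cm_tens_Aop_rel_def by blast
lemma balA: "tprod (cm_mult \<Delta> act (cm_target c) k) k' - tprod k (cm_mult \<Delta> act (cm_source c) k') \<in> VA"
  by (rule fspan_base) (unfold cm_tens_A_rel_def, blast)
lemma balop: "tprod (cm_mult \<Delta> act k (cm_target c)) k' - tprod k (cm_mult \<Delta> act (cm_target c) k') \<in> Vop"
  by (rule fspan_base) (unfold cm_tens_Aop_rel_def, blast)

lemma cm_mult_gen: "cm_mult \<Delta> act (gen (a, h, b)) (gen (a', h', b')) =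
   sw (\<lambda>u v. sw (\<lambda>p q. gen (a * act p a', q * h', act v b' * b)) u) h"
  by (simp add: cm_mult_def cop2_sw)

definition mu0 :: "'a \<Rightarrow> 'h \<Rightarrow> 'a \<Rightarrow> 'a \<Rightarrow> 'h \<Rightarrow> 'a \<Rightarrow> (('a \<times> 'h \<times> 'a) \<times> ('a \<times> 'h \<times> 'a)) fs" where
  "mu0 a h b a' h' b' = sw (\<lambda>u v. sw (\<lambda>y z. sw (\<lambda>p q. gen ((a, p, 1), (act (S v) (b * a'), S z * h', act (S q) b'))) y) u) h"

definition muf :: "(('a \<times> 'h \<times> 'a) \<times> ('a \<times> 'h \<times> 'a)) fs \<Rightarrow> (('a \<times> 'h \<times> 'a) \<times> ('a \<times> 'h \<times> 'a)) fs" where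
  "muf = lext (\<lambda>((a, h, b), (a', h', b')). mu0 a h b a' h' b')"

lemma mu_gen: "muf (gen ((a, h, b), (a', h', b'))) = mu0 a h b a' h' b'"
  unfolding muf_def by simp

lemma mu_sw: "muf (sw \<Phi> h) = sw (\<lambda>x y. muf (\<Phi> x y)) h"
  unfolding muf_def by (rule sw_lext)

lemma nu_sw: "cm_nu \<Delta> act (sw \<Phi> h) = sw (\<lambda>x y. cm_nu \<Delta> act (\<Phi> x y)) h"
  unfolding cm_nu_def by (rule sw_lext)

lemma nu_eq: "cm_nu \<Delta> act = lext (\<lambda>((a, h, b), (a', h', b')). nu0 a h b a' h' b')"
  unfolding cm_nu_def nu0_def
  by (rule arg_cong[where f = lext], rule ext) (auto simp: cop3_sw split: prod.splits)

context
  fixes V assumes V: "subsp V" and TTV: "TT \<subseteq> V"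
begin

lemma mu0_lin:
  "exl sc scA f \<Longrightarrow> linm sc V (\<lambda>t. mu0 (f t) h b a' h' b')"
  "exl sc scH g \<Longrightarrow> linm sc V (\<lambda>t. mu0 a (g t) b a' h' b')"
  "exl sc scA f \<Longrightarrow> linm sc V (\<lambda>t. mu0 a h (f t) a' h' b')"
  "exl sc scA f \<Longrightarrow> linm sc V (\<lambda>t. mu0 a h b (f t) h' b')"
  "exl sc scH g \<Longrightarrow> linm sc V (\<lambda>t. mu0 a h b a' (g t) b')"
  "exl sc scA f \<Longrightarrow> linm sc V (\<lambda>t. mu0 a h b a' h' (f t))"
  unfolding mu0_def by (intro linrules[OF V TTV] | assumption)+

end

lemma TT_map:
  fixes F :: "'a \<Rightarrow> 'h \<Rightarrow> 'a \<Rightarrow> 'a \<Rightarrow> 'h \<Rightarrow> 'a \<Rightarrow> 'c fs"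
  assumes V: "subsp V"
    and l1: "\<And>h b a' h' b'. linm scA V (\<lambda>t. F t h b a' h' b')"
    and l2: "\<And>a b a' h' b'. linm scH V (\<lambda>t. F a t b a' h' b')"
    and l3: "\<And>a h a' h' b'. linm scA V (\<lambda>t. F a h t a' h' b')"
    and l4: "\<And>a h b h' b'. linm scA V (\<lambda>t. F a h b t h' b')"
    and l5: "\<And>a h b a' b'. linm scH V (\<lambda>t. F a h b a' t b')"
    and l6: "\<And>a h b a' h'. linm scA V (\<lambda>t. F a h b a' h' t)"
    and r: "r \<in> TT"
  shows "lext (\<lambda>((a, h, b), (a', h', b')). F a h b a' h' b') r \<in> V"
proof -
  let ?F = "\<lambda>((a, h, b), (a', h', b')). F a h b a' h' b'"
  have CRc: "q \<in> CR \<Longrightarrow> (\<exists>r1 h b. q = lext (\<lambda>x. gen (x, h, b)) r1 \<and> r1 \<in> lin_rel scA)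
        \<or> (\<exists>a r1 b. q = lext (\<lambda>x. gen (a, x, b)) r1 \<and> r1 \<in> lin_rel scH)
        \<or> (\<exists>a h r1. q = lext (\<lambda>x. gen (a, h, x)) r1 \<and> r1 \<in> lin_rel scA)" for q
  proof -
    assume "q \<in> CR"
    then consider (a) r w where "q = tprod r (gen w)" "r \<in> lin_rel scA"
      | (b) v r2 where "q = tprod (gen v) r2" "r2 \<in> trel (lin_rel scH) (lin_rel scA)"
      unfolding cm_rel_def trel_def[of "lin_rel scA"] by blast
    then show ?thesis
    proof cases
      case a
      obtain h b where "w = (h, b)" by (cases w)
      then have "q = lext (\<lambda>x. gen (x, h, b)) r" using a by (simp add: tprod_gen_right)
      then show ?thesis using a(2) by blast
    next
      case b
      from b(2) consider (c) r1 w' where "r2 = tprod r1 (gen w')" "r1 \<in> lin_rel scH"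
        | (d) v' r1 where "r2 = tprod (gen v') r1" "r1 \<in> lin_rel scA"
        unfolding trel_def by blast
      then show ?thesis
      proof cases
        case c
        then have "q = lext (\<lambda>x. gen (v, x, w')) r1"
          using b(1) by (simp add: tprod_gen_right tprod_gen_left lext_comp)
        then show ?thesis using c(2) by blast
      next
        case d
        then have "q = lext (\<lambda>x. gen (v, v', x)) r1"
          using b(1) by (simp add: tprod_gen_left lext_comp)
        then show ?thesis using d(2) by blast
      qed
    qed
  qed
  from r consider (L) q w where "r = tprod q (gen w)" "q \<in> CR" | (R) v q where "r = tprod (gen v) q" "q \<in> CR"
    unfolding trel_def[of CR] by blast
  then show ?thesis
  proof cases
    case L
    obtain a' h' b' where w: "w = (a', h', b')" by (cases w)
    from CRc[OF L(2)] show ?thesis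
    proof (elim disjE exE conjE)
      fix r1 h b assume "q = lext (\<lambda>x. gen (x, h, b)) r1" "r1 \<in> lin_rel scA"
      then show ?thesis using lin_rel_map[OF V _ l1[of h b a' h' b']]
        by (simp add: L w tprod_gen_right lext_comp)
    next
      fix a r1 b assume "q = lext (\<lambda>x. gen (a, x, b)) r1" "r1 \<in> lin_rel scH"
      then show ?thesis using lin_rel_map[OF V _ l2[of a b a' h' b']]
        by (simp add: L w tprod_gen_right lext_comp)
    next
      fix a h r1 assume "q = lext (\<lambda>x. gen (a, h, x)) r1" "r1 \<in> lin_rel scA"
      then show ?thesis using lin_rel_map[OF V _ l3[of a h a' h' b']]
        by (simp add: L w tprod_gen_right lext_comp)
    qed
  next
    case R
    obtain a h b where w: "v = (a, h, b)" by (cases v)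
    from CRc[OF R(2)] show ?thesis
    proof (elim disjE exE conjE)
      fix r1 h' b' assume "q = lext (\<lambda>x. gen (x, h', b')) r1" "r1 \<in> lin_rel scA"
      then show ?thesis using lin_rel_map[OF V _ l4[of a h b h' b']]
        by (simp add: R w tprod_gen_left lext_comp)
    next
      fix a' r1 b' assume "q = lext (\<lambda>x. gen (a', x, b')) r1" "r1 \<in> lin_rel scH"
      then show ?thesis using lin_rel_map[OF V _ l5[of a h b a' b']]
        by (simp add: R w tprod_gen_left lext_comp)
    next
      fix a' h' r1 assume "q = lext (\<lambda>x. gen (a', h', x)) r1" "r1 \<in> lin_rel scA"
      then show ?thesis using lin_rel_map[OF V _ l6[of a h b a' h']]
        by (simp add: R w tprod_gen_left lext_comp)
    qed
  qed
qed

lemma nu_TT: "r \<in> TT \<Longrightarrow> cm_nu \<Delta> act r \<in> VA"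
  unfolding nu_eq by (rule TT_map[OF VA]) (rule nu0_lin[OF VA TT_VA exl_id] | assumption)+

lemma mu_TT: "r \<in> TT \<Longrightarrow> muf r \<in> Vop"
  unfolding muf_def by (rule TT_map[OF Vop]) (rule mu0_lin[OF Vop TT_Vop exl_id] | assumption)+

end

lemma bil_induct:
  assumes V: "subsp V"
    and a1: "\<And>f g k. B (f + g) k = B f k + B g k"
    and s1: "\<And>c f k. B (fsc c f) k = fsc c (B f k)"
    and a2: "\<And>f k k'. B f (k + k') = B f k + B f k'"
    and s2: "\<And>c f k. B f (fsc c k) = fsc c (B f k)"
    and g: "\<And>x y. B (gen x) (gen y) \<in> V"
  shows "B f k \<in> V"
proof -
  have z1: "B 0 k = 0" for k using s1[where c=0 and f=0 and k=k] by simp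
  have z2: "B f 0 = 0" for f using s2[where c=0 and f=f and k=0] by simp
  have "\<forall>k. B f k \<in> V"
  proof (rule fs_induct[where P = "\<lambda>f. \<forall>k. B f k \<in> V"])
    show "\<forall>k. B 0 k \<in> V" using z1 subsp_zero[OF V] by simp
  next
    fix x show "\<forall>k. B (gen x) k \<in> V"
    proof
      fix k show "B (gen x) k \<in> V"
        by (rule fs_induct[where P = "\<lambda>k. B (gen x) k \<in> V"])
           (auto simp: z2 a2 s2 g subsp_zero[OF V] intro: subsp_add[OF V] subsp_fsc[OF V])
    qed
  qed (auto simp: a1 s1 intro: subsp_add[OF V] subsp_fsc[OF V])
  then show ?thesis by blast
qed

context cmctx
begin

lemmas lrA = lin_eps[OF VA] lin_fscR[OF VA] sw_lin[OF VA] sw_lin_comp[OF VA] sw_lin_param[OF VA] slot1[OF VA TT_VA] slot2[OF VA TT_VA]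
  slot3[OF VA TT_VA] slot4[OF VA TT_VA] slot5[OF VA TT_VA] slot6[OF VA TT_VA]
  nu0_lin[OF VA TT_VA] mu0_lin[OF VA TT_VA] exl_rules
lemmas lrO = lin_eps[OF Vop] lin_fscR[OF Vop] sw_lin[OF Vop] sw_lin_comp[OF Vop] sw_lin_param[OF Vop] slot1[OF Vop TT_Vop] slot2[OF Vop TT_Vop]
  slot3[OF Vop TT_Vop] slot4[OF Vop TT_Vop] slot5[OF Vop TT_Vop] slot6[OF Vop TT_Vop]
  nu0_lin[OF Vop TT_Vop] mu0_lin[OF Vop TT_Vop] exl_rules

lemma P1_gen:
  "cm_nu \<Delta> act (tprod (cm_mult \<Delta> act (gen (a, h, b)) (cm_target c)) (gen (a', h', b')))
   - cm_nu \<Delta> act (tprod (gen (a, h, b)) (cm_mult \<Delta> act (cm_target c) (gen (a', h', b')))) \<in> VA"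
proof -
  note tr = eqv_trans[OF VA, trans]
  have L0: "cm_nu \<Delta> act (tprod (cm_mult \<Delta> act (gen (a, h, b)) (cm_target c)) (gen (a', h', b')))
     = sw (\<lambda>u v. sw (\<lambda>p q. nu0 (scA (\<epsilon> p) a) q (act v c * b) a' h' b') u) h"
    by (simp add: cm_target_def cm_mult_gen sw_tprod1 nu_sw nu_gen act_unit algA2[symmetric])
  have "eqv VA (sw (\<lambda>u v. sw (\<lambda>p q. nu0 (scA (\<epsilon> p) a) q (act v c * b) a' h' b') u) h)
      (sw (\<lambda>u v. sw (\<lambda>p q. fsc (\<epsilon> p) (nu0 a q (act v c * b) a' h' b')) u) h)"
    by (intro sw_cong[OF VA]) (use nu0_lin(1)[OF VA TT_VA exl_id] in \<open>simp add: linm_def eqv_def\<close>)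
  also have "eqv VA \<dots> (sw (\<lambda>u v. nu0 a u (act v c * b) a' h' b') h)"
    by (intro sw_cong[OF VA] counit_L[OF VA] lrA)
  also have "\<dots> = sw (\<lambda>u v. sw (\<lambda>u1 w4. sw (\<lambda>y1 w3. sw (\<lambda>w1 w2.
      gen ((a, w1, 1), (act w2 a', w3 * h', act w4 b' * (act v c * b)))) y1) u1) u) h"
    by (simp add: nu0_def)
  finally have L: "eqv VA (cm_nu \<Delta> act (tprod (cm_mult \<Delta> act (gen (a, h, b)) (cm_target c)) (gen (a', h', b'))))
      (sw (\<lambda>u v. sw (\<lambda>u1 w4. sw (\<lambda>y1 w3. sw (\<lambda>w1 w2.
      gen ((a, w1, 1), (act w2 a', w3 * h', act w4 b' * (act v c * b)))) y1) u1) u) h)"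
    unfolding L0 .
  have R0: "cm_nu \<Delta> act (tprod (gen (a, h, b)) (cm_mult \<Delta> act (cm_target c) (gen (a', h', b'))))
     = sw (\<lambda>u v. sw (\<lambda>p q. nu0 a h b (act p a') (q * h') (act v b' * c)) u) 1"
    by (simp add: cm_target_def cm_mult_gen sw_tprod2 nu_sw nu_gen)
  have inner: "eqv VA (sw (\<lambda>y z. sw (\<lambda>p q. gen ((a, p, 1), (act q a', z * h', act v (b' * c) * b))) y) u)
     (sw (\<lambda>x5 x6. sw (\<lambda>y z. sw (\<lambda>p q. gen ((a, p, 1), (act q a', z * h', act x5 b' * act x6 c * b))) y) u) v)"
    for u v
    by (rule act_prod_eqv[OF VA, where G = "\<lambda>w. sw (\<lambda>y z. sw (\<lambda>p q. gen ((a, p, 1), (act q a', z * h', w * b))) y) u"])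
       (intro lrA)+
  have "eqv VA (sw (\<lambda>u v. sw (\<lambda>p q. nu0 a h b (act p a') (q * h') (act v b' * c)) u) 1)
     (nu0 a h b (act 1 a') (1 * h') (act 1 b' * c))"
    by (rule cop2_one[OF VA]) (intro lrA)+
  also have "\<dots> = sw (\<lambda>u v. sw (\<lambda>y z. sw (\<lambda>p q. gen ((a, p, 1), (act q a', z * h', act v (b' * c) * b))) y) u) h"
    by (simp add: nu0_def act_one)
  also have "eqv VA \<dots> (sw (\<lambda>u v. sw (\<lambda>x5 x6. sw (\<lambda>y z. sw (\<lambda>p q. gen ((a, p, 1), (act q a', z * h', act x5 b' * act x6 c * b))) y) u) v) h)"
    by (rule sw_cong[OF VA], rule inner)
  also have "eqv VA \<dots> (sw (\<lambda>U x6. sw (\<lambda>u x5. sw (\<lambda>y z. sw (\<lambda>p q. gen ((a, p, 1), (act q a', z * h', act x5 b' * act x6 c * b))) y) u) U) h)"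
    by (rule eqv_sym[OF VA], rule CA[OF VA]) (intro lrA)+
  finally have R: "eqv VA (cm_nu \<Delta> act (tprod (gen (a, h, b)) (cm_mult \<Delta> act (cm_target c) (gen (a', h', b')))))
     (sw (\<lambda>U x6. sw (\<lambda>u x5. sw (\<lambda>y z. sw (\<lambda>p q. gen ((a, p, 1), (act q a', z * h', act x5 b' * act x6 c * b))) y) u) U) h)"
    unfolding R0 .
  have "eqv VA (cm_nu \<Delta> act (tprod (cm_mult \<Delta> act (gen (a, h, b)) (cm_target c)) (gen (a', h', b'))))
     (cm_nu \<Delta> act (tprod (gen (a, h, b)) (cm_mult \<Delta> act (cm_target c) (gen (a', h', b')))))"
    using L eqv_sym[OF VA R] by (simp add: mult.assoc eqv_trans[OF VA])
  then show ?thesis unfolding eqv_def .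
qed

end

context cmctx
begin

lemma nu_add: "cm_nu \<Delta> act (x + y) = cm_nu \<Delta> act x + cm_nu \<Delta> act y"
  unfolding cm_nu_def by (rule lext_add)
lemma nu_diff: "cm_nu \<Delta> act (x - y) = cm_nu \<Delta> act x - cm_nu \<Delta> act y"
  unfolding cm_nu_def by (rule lext_diff)
lemma nu_fsc: "cm_nu \<Delta> act (fsc c x) = fsc c (cm_nu \<Delta> act x)"
  unfolding cm_nu_def by (rule lext_fsc)
lemma mu_add: "muf (x + y) = muf x + muf y"
  unfolding muf_def by (rule lext_add)
lemma mu_diff: "muf (x - y) = muf x - muf y"
  unfolding muf_def by (rule lext_diff)
lemma mu_fsc: "muf (fsc c x) = fsc c (muf x)"
  unfolding muf_def by (rule lext_fsc)

lemma cm_mult_add1: "cm_mult \<Delta> act (f + g) k = cm_mult \<Delta> act f k + cm_mult \<Delta> act g k"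
  unfolding cm_mult_def by (rule bext_add1)
lemma cm_mult_add2: "cm_mult \<Delta> act k (f + g) = cm_mult \<Delta> act k f + cm_mult \<Delta> act k g"
  unfolding cm_mult_def by (rule bext_add2)
lemma cm_mult_fsc1: "cm_mult \<Delta> act (fsc c f) k = fsc c (cm_mult \<Delta> act f k)"
  unfolding cm_mult_def by (rule bext_fsc1)
lemma cm_mult_fsc2: "cm_mult \<Delta> act k (fsc c f) = fsc c (cm_mult \<Delta> act k f)"
  unfolding cm_mult_def by (rule bext_fsc2)

lemmas bil_simps = nu_add nu_diff nu_fsc mu_add mu_diff mu_fsc cm_mult_add1 cm_mult_add2 cm_mult_fsc1 cm_mult_fsc2
  tprod_add1 tprod_add2 tprod_fsc1 tprod_fsc2 fsc_add fsc_diff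

lemma nu_Nop: assumes "r \<in> Nop" shows "cm_nu \<Delta> act r \<in> VA"
proof -
  from assms consider "r \<in> TT" | c k k' where "r = tprod (cm_mult \<Delta> act k (cm_target c)) k' - tprod k (cm_mult \<Delta> act (cm_target c) k')"
    unfolding cm_tens_Aop_rel_def by blast
  then show ?thesis
  proof cases
    case 1 then show ?thesis by (rule nu_TT)
  next
    case 2
    have "cm_nu \<Delta> act (tprod (cm_mult \<Delta> act k (cm_target c)) k' - tprod k (cm_mult \<Delta> act (cm_target c) k')) \<in> VA"
    proof (rule bil_induct[OF VA, where B = "\<lambda>k k'. cm_nu \<Delta> act (tprod (cm_mult \<Delta> act k (cm_target c)) k' - tprod k (cm_mult \<Delta> act (cm_target c) k'))"])
      fix x y :: "'a \<times> 'h \<times> 'a"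
      obtain a h b where x: "x = (a, h, b)" by (cases x)
      obtain a' h' b' where y: "y = (a', h', b')" by (cases y)
      show "cm_nu \<Delta> act (tprod (cm_mult \<Delta> act (gen x) (cm_target c)) (gen y) - tprod (gen x) (cm_mult \<Delta> act (cm_target c) (gen y))) \<in> VA"
        unfolding x y nu_diff by (rule P1_gen)
    qed (simp_all add: bil_simps algebra_simps)
    then show ?thesis unfolding 2 .
  qed
qed

lemma nu_Vop: assumes x: "x \<in> Vop" shows "cm_nu \<Delta> act x \<in> VA"
  using lext_fspan[OF VA nu_Nop[unfolded cm_nu_def] x] unfolding cm_nu_def .

lemma P2_gen:
  "muf (tprod (cm_mult \<Delta> act (cm_target c) (gen (a, h, b))) (gen (a', h', b')))
   - muf (tprod (gen (a, h, b)) (cm_mult \<Delta> act (cm_source c) (gen (a', h', b')))) \<in> Vop"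
proof -
  note tr = eqv_trans[OF Vop, trans]
  have "eqv Vop (muf (tprod (cm_mult \<Delta> act (cm_target c) (gen (a, h, b))) (gen (a', h', b'))))
      (sw (\<lambda>u v. sw (\<lambda>p q. mu0 (act p a) (q * h) (act v b * c) a' h' b') u) 1)"
    by (simp add: cm_target_def cm_mult_gen sw_tprod1 mu_sw mu_gen eqv_refl[OF Vop])
  also have "eqv Vop \<dots> (mu0 (act 1 a) (1 * h) (act 1 b * c) a' h' b')"
    by (rule cop2_one[OF Vop]) (intro lrO)+
  also have "\<dots> = mu0 a h b (c * a') h' b'"
    by (simp add: act_one mu0_def mult.assoc)
  also have "eqv Vop \<dots> (mu0 a h b (c * act 1 a') (1 * h') (act 1 b') )"
    by (simp add: act_one eqv_refl[OF Vop])
  also have "eqv Vop \<dots> (sw (\<lambda>u v. sw (\<lambda>p q. mu0 a h b (c * act p a') (q * h') (act v b')) u) 1)"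
    by (rule eqv_sym[OF Vop], rule cop2_one[OF Vop]) (intro lrO)+
  also have "\<dots> = muf (tprod (gen (a, h, b)) (cm_mult \<Delta> act (cm_source c) (gen (a', h', b'))))"
    by (simp add: cm_source_def cm_mult_gen sw_tprod2 mu_sw mu_gen)
  finally show ?thesis unfolding eqv_def .
qed

lemma mu_NA: assumes "r \<in> NA" shows "muf r \<in> Vop"
proof -
  from assms consider "r \<in> TT" | c k k' where "r = tprod (cm_mult \<Delta> act (cm_target c) k) k' - tprod k (cm_mult \<Delta> act (cm_source c) k')"
    unfolding cm_tens_A_rel_def by blast
  then show ?thesis
  proof cases
    case 1 then show ?thesis by (rule mu_TT)
  next
    case 2
    have "muf (tprod (cm_mult \<Delta> act (cm_target c) k) k' - tprod k (cm_mult \<Delta> act (cm_source c) k')) \<in> Vop"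
    proof (rule bil_induct[OF Vop, where B = "\<lambda>k k'. muf (tprod (cm_mult \<Delta> act (cm_target c) k) k' - tprod k (cm_mult \<Delta> act (cm_source c) k'))"])
      fix x y :: "'a \<times> 'h \<times> 'a"
      obtain a h b where x: "x = (a, h, b)" by (cases x)
      obtain a' h' b' where y: "y = (a', h', b')" by (cases y)
      show "muf (tprod (cm_mult \<Delta> act (cm_target c) (gen x)) (gen y) - tprod (gen x) (cm_mult \<Delta> act (cm_source c) (gen y))) \<in> Vop"
        unfolding x y mu_diff by (rule P2_gen)
    qed (simp_all add: bil_simps algebra_simps)
    then show ?thesis unfolding 2 .
  qed
qed

lemma mu_VA: assumes x: "x \<in> VA" shows "muf x \<in> Vop"
  using lext_fspan[OF Vop mu_NA[unfolded muf_def] x] unfolding muf_def .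

end

context cmctx
begin

lemma P3a_step:
  "eqv Vop (gen ((a, u, 1), (a', h', b' * X))) (sw (\<lambda>w z. gen ((a, w, act z X), (a', h', b'))) u)"
proof -
  note tr = eqv_trans[OF Vop, trans]
  have b: "eqv Vop (tprod (cm_mult \<Delta> act (gen (a, u, 1)) (cm_target X)) (gen (a', h', b')))
     (tprod (gen (a, u, 1)) (cm_mult \<Delta> act (cm_target X) (gen (a', h', b'))))"
    using balop unfolding eqv_def .
  have "eqv Vop (gen ((a, u, 1), (a', h', b' * X))) (gen ((a, u, 1), (act 1 a', 1 * h', act 1 b' * X)))"
    by (simp add: act_one eqv_refl[OF Vop])
  also have "eqv Vop \<dots> (sw (\<lambda>w z. sw (\<lambda>p q. gen ((a, u, 1), (act p a', q * h', act z b' * X))) w) 1)"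
    by (rule eqv_sym[OF Vop], rule cop2_one[OF Vop]) (intro lrO)+
  also have "\<dots> = tprod (gen (a, u, 1)) (cm_mult \<Delta> act (cm_target X) (gen (a', h', b')))"
    by (simp add: cm_target_def cm_mult_gen sw_tprod2)
  also have "eqv Vop \<dots> (tprod (cm_mult \<Delta> act (gen (a, u, 1)) (cm_target X)) (gen (a', h', b')))"
    by (rule eqv_sym[OF Vop b])
  also have "\<dots> = sw (\<lambda>w z. sw (\<lambda>p q. gen ((scA (\<epsilon> p) a, q, act z X), (a', h', b'))) w) u"
    by (simp add: cm_target_def cm_mult_gen sw_tprod1 act_unit algA2[symmetric])
  also have "eqv Vop \<dots> (sw (\<lambda>w z. sw (\<lambda>p q. fsc (\<epsilon> p) (gen ((a, q, act z X), (a', h', b')))) w) u)"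
    by (intro sw_cong[OF Vop]) (use slot1[OF Vop TT_Vop exl_id] in \<open>simp add: linm_def eqv_def\<close>)
  also have "eqv Vop \<dots> (sw (\<lambda>w z. gen ((a, w, act z X), (a', h', b'))) u)"
    by (intro sw_cong[OF Vop] counit_L[OF Vop] lrO)
  finally show ?thesis .
qed

lemma P3a:
  "eqv Vop (gen ((a, h, b), (a', h', b'))) (sw (\<lambda>u v. gen ((a, u, 1), (a', h', b' * act (S v) b))) h)"
proof -
  note tr = eqv_trans[OF Vop, trans]
  have st: "eqv Vop (sw (\<lambda>z v. gen ((a, w, act (z * S v) b), (a', h', b'))) r)
     (fsc (\<epsilon> r) (gen ((a, w, act 1 b), (a', h', b'))))" for w r
    by (rule antipode_R[OF Vop, where G = "\<lambda>y. gen ((a, w, act y b), (a', h', b'))"]) (intro lrO)+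
  have "eqv Vop (sw (\<lambda>u v. gen ((a, u, 1), (a', h', b' * act (S v) b))) h)
      (sw (\<lambda>u v. sw (\<lambda>w z. gen ((a, w, act z (act (S v) b)), (a', h', b'))) u) h)"
    by (rule sw_cong[OF Vop], rule P3a_step)
  also have "\<dots> = sw (\<lambda>u v. sw (\<lambda>w z. gen ((a, w, act (z * S v) b), (a', h', b'))) u) h"
    by (simp add: act_mult)
  also have "eqv Vop \<dots> (sw (\<lambda>w r. sw (\<lambda>z v. gen ((a, w, act (z * S v) b), (a', h', b'))) r) h)"
    by (rule CA[OF Vop]) (intro lrO)+
  also have "eqv Vop \<dots> (sw (\<lambda>w r. fsc (\<epsilon> r) (gen ((a, w, act 1 b), (a', h', b')))) h)"
    by (rule sw_cong[OF Vop], rule st)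
  also have "eqv Vop \<dots> (gen ((a, h, act 1 b), (a', h', b')))"
    by (rule counit_R[OF Vop]) (intro lrO)+
  also have "\<dots> = gen ((a, h, b), (a', h', b'))" by (simp add: act_one)
  finally show ?thesis by (rule eqv_sym[OF Vop])
qed

end

context cmctx
begin

lemma P3b:
  "eqv Vop (muf (cm_nu \<Delta> act (gen ((a, h, 1), (a', h', b'))))) (gen ((a, h, 1), (a', h', b')))"
proof -
  note tr = eqv_trans[OF Vop, trans]
  have R1: "eqv Vop (sw (\<lambda>h1 k5. sw (\<lambda>u' k4. sw (\<lambda>y' k3. sw (\<lambda>k1 k2. gen ((a, k1, 1), (act (S k4 * k5) a', (S k3 * k6) * h', act (S k2 * k7) b'))) y') u') h1) y) (sw (\<lambda>u' n. sw (\<lambda>k4 k5. sw (\<lambda>y' k3. sw (\<lambda>k1 k2. gen ((a, k1, 1), (act (S k4 * k5) a', (S k3 * k6) * h', act (S k2 * k7) b'))) y') u') n) y)" for y k6 k7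
    by (rule CA[OF Vop]) (intro lrO)+
  have A1: "eqv Vop (sw (\<lambda>k4 k5. sw (\<lambda>y' k3. sw (\<lambda>k1 k2. gen ((a, k1, 1), (act (S k4 * k5) a', (S k3 * k6) * h', act (S k2 * k7) b'))) y') u') n) (fsc (\<epsilon> n) (sw (\<lambda>y' k3. sw (\<lambda>k1 k2. gen ((a, k1, 1), (act (1) a', (S k3 * k6) * h', act (S k2 * k7) b'))) y') u'))" for u' n k6 k7
    by (rule antipode_L[OF Vop, where G = "\<lambda>w. sw (\<lambda>y' k3. sw (\<lambda>k1 k2. gen ((a, k1, 1), (act (w) a', (S k3 * k6) * h', act (S k2 * k7) b'))) y') u'"]) (intro lrO)+
  have R2: "eqv Vop (sw (\<lambda>y k6. sw (\<lambda>u' n. fsc (\<epsilon> n) (sw (\<lambda>y' k3. sw (\<lambda>k1 k2. gen ((a, k1, 1), (act (1) a', (S k3 * k6) * h', act (S k2 * k7) b'))) y') u')) y) u) (sw (\<lambda>u' m. sw (\<lambda>n k6. fsc (\<epsilon> n) (sw (\<lambda>y' k3. sw (\<lambda>k1 k2. gen ((a, k1, 1), (act (1) a', (S k3 * k6) * h', act (S k2 * k7) b'))) y') u')) m) u)" for u k7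
    by (rule CA[OF Vop]) (intro lrO)+
  have C1: "eqv Vop (sw (\<lambda>n k6. fsc (\<epsilon> n) (sw (\<lambda>y' k3. sw (\<lambda>k1 k2. gen ((a, k1, 1), (act (1) a', (S k3 * k6) * h', act (S k2 * k7) b'))) y') u')) m) (sw (\<lambda>y' k3. sw (\<lambda>k1 k2. gen ((a, k1, 1), (act (1) a', (S k3 * m) * h', act (S k2 * k7) b'))) y') u')" for m u' k7
    by (rule counit_L[OF Vop]) (intro lrO)+
  have R3: "eqv Vop (sw (\<lambda>u' m. sw (\<lambda>y' k3. sw (\<lambda>k1 k2. gen ((a, k1, 1), (act (1) a', (S k3 * m) * h', act (S k2 * k7) b'))) y') u') u) (sw (\<lambda>y' p. sw (\<lambda>k3 m. sw (\<lambda>k1 k2. gen ((a, k1, 1), (act (1) a', (S k3 * m) * h', act (S k2 * k7) b'))) y') p) u)" for u k7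
    by (rule CA[OF Vop]) (intro lrO)+
  have A2: "eqv Vop (sw (\<lambda>k3 m. sw (\<lambda>k1 k2. gen ((a, k1, 1), (act (1) a', (S k3 * m) * h', act (S k2 * k7) b'))) y') p) (fsc (\<epsilon> p) (sw (\<lambda>k1 k2. gen ((a, k1, 1), (act (1) a', (1) * h', act (S k2 * k7) b'))) y'))" for y' p k7
    by (rule antipode_L[OF Vop, where G = "\<lambda>w. sw (\<lambda>k1 k2. gen ((a, k1, 1), (act (1) a', (w) * h', act (S k2 * k7) b'))) y'"]) (intro lrO)+
  have C2: "eqv Vop (sw (\<lambda>p k7. fsc (\<epsilon> p) (sw (\<lambda>k1 k2. gen ((a, k1, 1), (act (1) a', (1) * h', act (S k2 * k7) b'))) y')) q) (sw (\<lambda>k1 k2. gen ((a, k1, 1), (act (1) a', (1) * h', act (S k2 * q) b'))) y')" for y' q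
    by (rule counit_L[OF Vop]) (intro lrO)+
  have A3: "eqv Vop (sw (\<lambda>k2 q. gen ((a, k1, 1), (act (1) a', (1) * h', act (S k2 * q) b'))) t) (fsc (\<epsilon> t) (gen ((a, k1, 1), (act (1) a', (1) * h', act (1) b'))))" for k1 t
    by (rule antipode_L[OF Vop, where G = "\<lambda>w. gen ((a, k1, 1), (act (1) a', (1) * h', act (w) b'))"]) (intro lrO)+
  have "eqv Vop (muf (cm_nu \<Delta> act (gen ((a, h, 1), (a', h', b'))))) (sw (\<lambda>u k7. sw (\<lambda>y k6. sw (\<lambda>h1 k5. sw (\<lambda>u' k4. sw (\<lambda>y' k3. sw (\<lambda>k1 k2. gen ((a, k1, 1), (act (S k4 * k5) a', (S k3 * k6) * h', act (S k2 * k7) b'))) y') u') h1) y) u) h)"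
    by (simp add: nu_gen nu0_def mu_sw mu_gen mu0_def act_mult mult.assoc eqv_refl[OF Vop])
  also have "eqv Vop \<dots> (sw (\<lambda>u k7. sw (\<lambda>y k6. sw (\<lambda>u' n. sw (\<lambda>k4 k5. sw (\<lambda>y' k3. sw (\<lambda>k1 k2. gen ((a, k1, 1), (act (S k4 * k5) a', (S k3 * k6) * h', act (S k2 * k7) b'))) y') u') n) y) u) h)"
    by (rule sw_cong[OF Vop], rule sw_cong[OF Vop], rule R1)
  also have "eqv Vop \<dots> (sw (\<lambda>u k7. sw (\<lambda>y k6. sw (\<lambda>u' n. fsc (\<epsilon> n) (sw (\<lambda>y' k3. sw (\<lambda>k1 k2. gen ((a, k1, 1), (act (1) a', (S k3 * k6) * h', act (S k2 * k7) b'))) y') u')) y) u) h)"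
    by (rule sw_cong[OF Vop], rule sw_cong[OF Vop], rule sw_cong[OF Vop], rule A1)
  also have "eqv Vop \<dots> (sw (\<lambda>u k7. sw (\<lambda>u' m. sw (\<lambda>n k6. fsc (\<epsilon> n) (sw (\<lambda>y' k3. sw (\<lambda>k1 k2. gen ((a, k1, 1), (act (1) a', (S k3 * k6) * h', act (S k2 * k7) b'))) y') u')) m) u) h)"
    by (rule sw_cong[OF Vop], rule R2)
  also have "eqv Vop \<dots> (sw (\<lambda>u k7. sw (\<lambda>u' m. sw (\<lambda>y' k3. sw (\<lambda>k1 k2. gen ((a, k1, 1), (act (1) a', (S k3 * m) * h', act (S k2 * k7) b'))) y') u') u) h)"
    by (rule sw_cong[OF Vop], rule sw_cong[OF Vop], rule C1)
  also have "eqv Vop \<dots> (sw (\<lambda>u k7. sw (\<lambda>y' p. sw (\<lambda>k3 m. sw (\<lambda>k1 k2. gen ((a, k1, 1), (act (1) a', (S k3 * m) * h', act (S k2 * k7) b'))) y') p) u) h)"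
    by (rule sw_cong[OF Vop], rule R3)
  also have "eqv Vop \<dots> (sw (\<lambda>u k7. sw (\<lambda>y' p. fsc (\<epsilon> p) (sw (\<lambda>k1 k2. gen ((a, k1, 1), (act (1) a', (1) * h', act (S k2 * k7) b'))) y')) u) h)"
    by (rule sw_cong[OF Vop], rule sw_cong[OF Vop], rule A2)
  also have "eqv Vop \<dots> (sw (\<lambda>y' q. sw (\<lambda>p k7. fsc (\<epsilon> p) (sw (\<lambda>k1 k2. gen ((a, k1, 1), (act (1) a', (1) * h', act (S k2 * k7) b'))) y')) q) h)"
    by (rule CA[OF Vop]) (intro lrO)+
  also have "eqv Vop \<dots> (sw (\<lambda>y' q. sw (\<lambda>k1 k2. gen ((a, k1, 1), (act (1) a', (1) * h', act (S k2 * q) b'))) y') h)"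
    by (rule sw_cong[OF Vop], rule C2)
  also have "eqv Vop \<dots> (sw (\<lambda>k1 t. sw (\<lambda>k2 q. gen ((a, k1, 1), (act (1) a', (1) * h', act (S k2 * q) b'))) t) h)"
    by (rule CA[OF Vop]) (intro lrO)+
  also have "eqv Vop \<dots> (sw (\<lambda>k1 t. fsc (\<epsilon> t) (gen ((a, k1, 1), (act (1) a', (1) * h', act (1) b')))) h)"
    by (rule sw_cong[OF Vop], rule A3)
  also have "eqv Vop \<dots> (gen ((a, h, 1), (act (1) a', (1) * h', act (1) b')))"
    by (rule counit_R[OF Vop]) (intro lrO)+
  also have "eqv Vop \<dots> (gen ((a, h, 1), (a', h', b')))"
    by (simp add: act_one eqv_refl[OF Vop])
  finally show ?thesis .
qed

lemma P4_main:
  "eqv VA (cm_nu \<Delta> act (muf (gen ((a, h, b), (a', h', b'))))) (gen ((a, h, 1), (b * a', h', b')))"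
proof -
  note tr = eqv_trans[OF VA, trans]
  have R1: "eqv VA (sw (\<lambda>x1 k5. sw (\<lambda>u' k4. sw (\<lambda>y' k3. sw (\<lambda>k1 k2. gen ((a, k1, 1), (act (k2 * S k7) (b * a'), (k3 * S k6) * h', act (k4 * S k5) b'))) y') u') x1) y) (sw (\<lambda>u' n. sw (\<lambda>k4 k5. sw (\<lambda>y' k3. sw (\<lambda>k1 k2. gen ((a, k1, 1), (act (k2 * S k7) (b * a'), (k3 * S k6) * h', act (k4 * S k5) b'))) y') u') n) y)" for y k6 k7
    by (rule CA[OF VA]) (intro lrA)+
  have A1: "eqv VA (sw (\<lambda>k4 k5. sw (\<lambda>y' k3. sw (\<lambda>k1 k2. gen ((a, k1, 1), (act (k2 * S k7) (b * a'), (k3 * S k6) * h', act (k4 * S k5) b'))) y') u') n) (fsc (\<epsilon> n) (sw (\<lambda>y' k3. sw (\<lambda>k1 k2. gen ((a, k1, 1), (act (k2 * S k7) (b * a'), (k3 * S k6) * h', act (1) b'))) y') u'))" for u' n k6 k7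
    by (rule antipode_R[OF VA, where G = "\<lambda>w. sw (\<lambda>y' k3. sw (\<lambda>k1 k2. gen ((a, k1, 1), (act (k2 * S k7) (b * a'), (k3 * S k6) * h', act (w) b'))) y') u'"]) (intro lrA)+
  have P1: "fsc (\<epsilon> n) (sw (\<lambda>y' k3. sw (\<lambda>k1 k2. gen ((a, k1, 1), (act (k2 * S k7) (b * a'), (k3 * S k6) * h', act (1) b'))) y') u') = sw (\<lambda>y' k3. fsc (\<epsilon> n) (sw (\<lambda>k1 k2. gen ((a, k1, 1), (act (k2 * S k7) (b * a'), (k3 * S k6) * h', act (1) b'))) y')) u'" for n u' k6 k7
    by (rule sw_fsc)
  have R2: "eqv VA (sw (\<lambda>u' n. sw (\<lambda>y' k3. fsc (\<epsilon> n) (sw (\<lambda>k1 k2. gen ((a, k1, 1), (act (k2 * S k7) (b * a'), (k3 * S k6) * h', act (1) b'))) y')) u') y) (sw (\<lambda>y' m. sw (\<lambda>k3 n. fsc (\<epsilon> n) (sw (\<lambda>k1 k2. gen ((a, k1, 1), (act (k2 * S k7) (b * a'), (k3 * S k6) * h', act (1) b'))) y')) m) y)" for y k6 k7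
    by (rule CA[OF VA]) (intro lrA)+
  have C1: "eqv VA (sw (\<lambda>k3 n. fsc (\<epsilon> n) (sw (\<lambda>k1 k2. gen ((a, k1, 1), (act (k2 * S k7) (b * a'), (k3 * S k6) * h', act (1) b'))) y')) m) (sw (\<lambda>k1 k2. gen ((a, k1, 1), (act (k2 * S k7) (b * a'), (m * S k6) * h', act (1) b'))) y')" for y' m k6 k7
    by (rule counit_R[OF VA]) (intro lrA)+
  have R3: "eqv VA (sw (\<lambda>y k6. sw (\<lambda>y' m. sw (\<lambda>k1 k2. gen ((a, k1, 1), (act (k2 * S k7) (b * a'), (m * S k6) * h', act (1) b'))) y') y) u) (sw (\<lambda>y' p. sw (\<lambda>m k6. sw (\<lambda>k1 k2. gen ((a, k1, 1), (act (k2 * S k7) (b * a'), (m * S k6) * h', act (1) b'))) y') p) u)" for u k7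
    by (rule CA[OF VA]) (intro lrA)+
  have A2: "eqv VA (sw (\<lambda>m k6. sw (\<lambda>k1 k2. gen ((a, k1, 1), (act (k2 * S k7) (b * a'), (m * S k6) * h', act (1) b'))) y') p) (fsc (\<epsilon> p) (sw (\<lambda>k1 k2. gen ((a, k1, 1), (act (k2 * S k7) (b * a'), (1) * h', act (1) b'))) y'))" for y' p k7
    by (rule antipode_R[OF VA, where G = "\<lambda>w. sw (\<lambda>k1 k2. gen ((a, k1, 1), (act (k2 * S k7) (b * a'), (w) * h', act (1) b'))) y'"]) (intro lrA)+
  have R4: "eqv VA (sw (\<lambda>y' p. sw (\<lambda>k1 k2. fsc (\<epsilon> p) (gen ((a, k1, 1), (act (k2 * S k7) (b * a'), (1) * h', act (1) b')))) y') u) (sw (\<lambda>k1 q. sw (\<lambda>k2 p. fsc (\<epsilon> p) (gen ((a, k1, 1), (act (k2 * S k7) (b * a'), (1) * h', act (1) b')))) q) u)" for u k7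
    by (rule CA[OF VA]) (intro lrA)+
  have C2: "eqv VA (sw (\<lambda>k2 p. fsc (\<epsilon> p) (gen ((a, k1, 1), (act (k2 * S k7) (b * a'), (1) * h', act (1) b')))) q) (gen ((a, k1, 1), (act (q * S k7) (b * a'), (1) * h', act (1) b')))" for k1 q k7
    by (rule counit_R[OF VA]) (intro lrA)+
  have A3: "eqv VA (sw (\<lambda>q k7. gen ((a, k1, 1), (act (q * S k7) (b * a'), (1) * h', act (1) b'))) t) (fsc (\<epsilon> t) (gen ((a, k1, 1), (act (1) (b * a'), (1) * h', act (1) b'))))" for k1 t
    by (rule antipode_R[OF VA, where G = "\<lambda>w. gen ((a, k1, 1), (act (w) (b * a'), (1) * h', act (1) b'))"]) (intro lrA)+
  have "eqv VA (cm_nu \<Delta> act (muf (gen ((a, h, b), (a', h', b'))))) (sw (\<lambda>u k7. sw (\<lambda>y k6. sw (\<lambda>x1 k5. sw (\<lambda>u' k4. sw (\<lambda>y' k3. sw (\<lambda>k1 k2. gen ((a, k1, 1), (act (k2 * S k7) (b * a'), (k3 * S k6) * h', act (k4 * S k5) b'))) y') u') x1) y) u) h)"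
    by (simp add: nu_gen nu0_def nu_sw mu_gen mu0_def act_mult mult.assoc eqv_refl[OF VA])
  also have "eqv VA \<dots> (sw (\<lambda>u k7. sw (\<lambda>y k6. sw (\<lambda>u' n. sw (\<lambda>k4 k5. sw (\<lambda>y' k3. sw (\<lambda>k1 k2. gen ((a, k1, 1), (act (k2 * S k7) (b * a'), (k3 * S k6) * h', act (k4 * S k5) b'))) y') u') n) y) u) h)"
    by (rule sw_cong[OF VA], rule sw_cong[OF VA], rule R1)
  also have "eqv VA \<dots> (sw (\<lambda>u k7. sw (\<lambda>y k6. sw (\<lambda>u' n. fsc (\<epsilon> n) (sw (\<lambda>y' k3. sw (\<lambda>k1 k2. gen ((a, k1, 1), (act (k2 * S k7) (b * a'), (k3 * S k6) * h', act (1) b'))) y') u')) y) u) h)"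
    by (rule sw_cong[OF VA], rule sw_cong[OF VA], rule sw_cong[OF VA], rule A1)
  also have "eqv VA \<dots> (sw (\<lambda>u k7. sw (\<lambda>y k6. sw (\<lambda>u' n. sw (\<lambda>y' k3. fsc (\<epsilon> n) (sw (\<lambda>k1 k2. gen ((a, k1, 1), (act (k2 * S k7) (b * a'), (k3 * S k6) * h', act (1) b'))) y')) u') y) u) h)"
    by (simp only: P1 eqv_refl[OF VA])
  also have "eqv VA \<dots> (sw (\<lambda>u k7. sw (\<lambda>y k6. sw (\<lambda>y' m. sw (\<lambda>k3 n. fsc (\<epsilon> n) (sw (\<lambda>k1 k2. gen ((a, k1, 1), (act (k2 * S k7) (b * a'), (k3 * S k6) * h', act (1) b'))) y')) m) y) u) h)"
    by (rule sw_cong[OF VA], rule sw_cong[OF VA], rule R2)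
  also have "eqv VA \<dots> (sw (\<lambda>u k7. sw (\<lambda>y k6. sw (\<lambda>y' m. sw (\<lambda>k1 k2. gen ((a, k1, 1), (act (k2 * S k7) (b * a'), (m * S k6) * h', act (1) b'))) y') y) u) h)"
    by (rule sw_cong[OF VA], rule sw_cong[OF VA], rule sw_cong[OF VA], rule C1)
  also have "eqv VA \<dots> (sw (\<lambda>u k7. sw (\<lambda>y' p. sw (\<lambda>m k6. sw (\<lambda>k1 k2. gen ((a, k1, 1), (act (k2 * S k7) (b * a'), (m * S k6) * h', act (1) b'))) y') p) u) h)"
    by (rule sw_cong[OF VA], rule R3)
  also have "eqv VA \<dots> (sw (\<lambda>u k7. sw (\<lambda>y' p. fsc (\<epsilon> p) (sw (\<lambda>k1 k2. gen ((a, k1, 1), (act (k2 * S k7) (b * a'), (1) * h', act (1) b'))) y')) u) h)"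
    by (rule sw_cong[OF VA], rule sw_cong[OF VA], rule A2)
  also have "eqv VA \<dots> (sw (\<lambda>u k7. sw (\<lambda>y' p. sw (\<lambda>k1 k2. fsc (\<epsilon> p) (gen ((a, k1, 1), (act (k2 * S k7) (b * a'), (1) * h', act (1) b')))) y') u) h)"
    by (simp only: sw_fsc eqv_refl[OF VA])
  also have "eqv VA \<dots> (sw (\<lambda>u k7. sw (\<lambda>k1 q. sw (\<lambda>k2 p. fsc (\<epsilon> p) (gen ((a, k1, 1), (act (k2 * S k7) (b * a'), (1) * h', act (1) b')))) q) u) h)"
    by (rule sw_cong[OF VA], rule R4)
  also have "eqv VA \<dots> (sw (\<lambda>u k7. sw (\<lambda>k1 q. gen ((a, k1, 1), (act (q * S k7) (b * a'), (1) * h', act (1) b'))) u) h)"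
    by (rule sw_cong[OF VA], rule sw_cong[OF VA], rule C2)
  also have "eqv VA \<dots> (sw (\<lambda>k1 t. sw (\<lambda>q k7. gen ((a, k1, 1), (act (q * S k7) (b * a'), (1) * h', act (1) b'))) t) h)"
    by (rule CA[OF VA]) (intro lrA)+
  also have "eqv VA \<dots> (sw (\<lambda>k1 t. fsc (\<epsilon> t) (gen ((a, k1, 1), (act (1) (b * a'), (1) * h', act (1) b')))) h)"
    by (rule sw_cong[OF VA], rule A3)
  also have "eqv VA \<dots> (gen ((a, h, 1), (act (1) (b * a'), (1) * h', act (1) b')))"
    by (rule counit_R[OF VA]) (intro lrA)+
  also have "eqv VA \<dots> (gen ((a, h, 1), (b * a', h', b')))"
    by (simp add: act_one eqv_refl[OF VA])
  finally show ?thesis .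
qed

end

context cmctx
begin

lemma P3: "eqv Vop (muf (cm_nu \<Delta> act x)) x"
proof (induction x rule: fs_induct)
  case 1 then show ?case by (simp add: cm_nu_def muf_def eqv_refl[OF Vop])
next
  case (2 g)
  obtain a h b a' h' b' where g: "g = ((a, h, b), (a', h', b'))" by (cases g) auto
  note tr = eqv_trans[OF Vop, trans]
  let ?nf = "sw (\<lambda>u v. gen ((a, u, 1), (a', h', b' * act (S v) b))) h"
  have e1: "gen g - ?nf \<in> Vop" using P3a[of a h b a' h' b'] unfolding g eqv_def .
  have "eqv Vop (muf (cm_nu \<Delta> act (gen g))) (muf (cm_nu \<Delta> act ?nf))"
    using mu_VA[OF nu_Vop[OF e1]] unfolding eqv_def nu_diff mu_diff .
  also have "muf (cm_nu \<Delta> act ?nf) = sw (\<lambda>u v. muf (cm_nu \<Delta> act (gen ((a, u, 1), (a', h', b' * act (S v) b))))) h"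
    by (simp add: nu_sw mu_sw)
  also have "eqv Vop \<dots> ?nf"
    by (rule sw_cong[OF Vop], rule P3b)
  also have "eqv Vop ?nf (gen g)"
    using P3a[of a h b a' h' b'] eqv_sym[OF Vop] unfolding g by blast
  finally show ?case .
next
  case (3 f g)
  then show ?case by (simp add: nu_add mu_add eqv_add[OF Vop])
next
  case (4 c f)
  then show ?case by (simp add: nu_fsc mu_fsc eqv_fsc[OF Vop])
qed

lemma P4_fin: "eqv VA (gen ((a, h, 1), (b * a', h', b'))) (gen ((a, h, b), (a', h', b')))"
proof -
  note tr = eqv_trans[OF VA, trans]
  have bal: "eqv VA (tprod (cm_mult \<Delta> act (cm_target b) (gen (a, h, 1))) (gen (a', h', b')))
     (tprod (gen (a, h, 1)) (cm_mult \<Delta> act (cm_source b) (gen (a', h', b'))))"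
    using balA unfolding eqv_def .
  have "eqv VA (gen ((a, h, 1), (b * a', h', b'))) (gen ((a, h, 1), (b * act 1 a', 1 * h', act 1 b')))"
    by (simp add: act_one eqv_refl[OF VA])
  also have "eqv VA \<dots> (sw (\<lambda>u v. sw (\<lambda>p q. gen ((a, h, 1), (b * act p a', q * h', act v b'))) u) 1)"
    by (rule eqv_sym[OF VA], rule cop2_one[OF VA]) (intro lrA)+
  also have "eqv VA \<dots> (tprod (gen (a, h, 1)) (cm_mult \<Delta> act (cm_source b) (gen (a', h', b'))))"
    by (simp add: cm_source_def cm_mult_gen sw_tprod2 eqv_refl[OF VA])
  also have "eqv VA \<dots> (tprod (cm_mult \<Delta> act (cm_target b) (gen (a, h, 1))) (gen (a', h', b')))"
    by (rule eqv_sym[OF VA bal])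
  also have "eqv VA \<dots> (sw (\<lambda>u v. sw (\<lambda>p q. gen ((act p a, q * h, act v 1 * b), (a', h', b'))) u) 1)"
    by (simp add: cm_target_def cm_mult_gen sw_tprod1 eqv_refl[OF VA])
  also have "eqv VA \<dots> (gen ((act 1 a, 1 * h, act 1 1 * b), (a', h', b')))"
    by (rule cop2_one[OF VA]) (intro lrA)+
  also have "eqv VA \<dots> (gen ((a, h, b), (a', h', b')))"
    by (simp add: act_one eqv_refl[OF VA])
  finally show ?thesis .
qed

lemma P4: "eqv VA (cm_nu \<Delta> act (muf x)) x"
proof (induction x rule: fs_induct)
  case 1 then show ?case by (simp add: cm_nu_def muf_def eqv_refl[OF VA])
next
  case (2 g)
  obtain a h b a' h' b' where g: "g = ((a, h, b), (a', h', b'))" by (cases g) auto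
  show ?case unfolding g using eqv_trans[OF VA P4_main P4_fin] .
next
  case (3 f g)
  then show ?case by (simp add: nu_add mu_add eqv_add[OF VA])
next
  case (4 c f)
  then show ?case by (simp add: nu_fsc mu_fsc eqv_fsc[OF VA])
qed

end

theorem mainTheorem9:
  fixes scH :: "complex \<Rightarrow> 'h::ring_1 \<Rightarrow> 'h"
    and \<Delta> :: "'h \<Rightarrow> ('h \<times> 'h) fs"
    and \<epsilon> :: "'h \<Rightarrow> complex"
    and S :: "'h \<Rightarrow> 'h"
    and scA :: "complex \<Rightarrow> 'a::ring_1 \<Rightarrow> 'a"
    and act :: "'h \<Rightarrow> 'a \<Rightarrow> 'a"
  assumes "hopf_algebra scH \<Delta> \<epsilon> S"
    and "module_algebra scH \<Delta> \<epsilon> scA act"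
  shows "(\<forall>x y. fequiv (cm_tens_Aop_rel scA scH \<Delta> act) x y
               \<longrightarrow> fequiv (cm_tens_A_rel scA scH \<Delta> act) (cm_nu \<Delta> act x) (cm_nu \<Delta> act y))
       \<and> (\<forall>x y. fequiv (cm_tens_A_rel scA scH \<Delta> act) (cm_nu \<Delta> act x) (cm_nu \<Delta> act y)
               \<longrightarrow> fequiv (cm_tens_Aop_rel scA scH \<Delta> act) x y)
       \<and> (\<forall>z. \<exists>x. fequiv (cm_tens_A_rel scA scH \<Delta> act) (cm_nu \<Delta> act x) z)"
proof -
  interpret cmctx scH \<Delta> \<epsilon> S scA act
    by unfold_locales (rule assms)+
  have i: "fequiv Nop x y \<Longrightarrow> fequiv NA (cm_nu \<Delta> act x) (cm_nu \<Delta> act y)" for x y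
    unfolding fequiv_def nu_diff[symmetric] by (rule nu_Vop)
  have ii: "fequiv NA (cm_nu \<Delta> act x) (cm_nu \<Delta> act y) \<Longrightarrow> fequiv Nop x y" for x y
  proof -
    assume "fequiv NA (cm_nu \<Delta> act x) (cm_nu \<Delta> act y)"
    then have "cm_nu \<Delta> act (x - y) \<in> VA" unfolding fequiv_def nu_diff .
    then have m: "muf (cm_nu \<Delta> act (x - y)) \<in> Vop" by (rule mu_VA)
    have "(x - y) - muf (cm_nu \<Delta> act (x - y)) \<in> Vop"
      using P3[of "x - y"] eqv_sym[OF Vop] unfolding eqv_def by blast
    then have "((x - y) - muf (cm_nu \<Delta> act (x - y))) + muf (cm_nu \<Delta> act (x - y)) \<in> Vop"
      by (rule subsp_add[OF Vop _ m])
    then show ?thesis unfolding fequiv_def by simp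
  qed
  have iii: "\<exists>x. fequiv NA (cm_nu \<Delta> act x) z" for z
    using P4[of z] unfolding eqv_def fequiv_def by blast
  show ?thesis using i ii iii by blast
qed

end
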